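(* Suppose $u_1$ is strictly supermodular with respect to total orders $(\succsim_{Y_0},\succsim_{A_1})$. For any stage strategy $s_1^*$ of player 1, the following are equivalent: (1) $s_1^*$ is confound-defeating; (2) $s_1^*$ is monotone; (3) $s_1^*$ is $u_1$-cyclically monotone.
   Context: Three players $0,1,2$ have finite action sets $A_0,A_1,A_2$; $Y_0,Y_1$ are finite signal sets. Player 0 takes $a_0$, generating a signal $y_0\sim\rho_0(\cdot\mid a_0)$ observed only by player 1; players 1 and 2 then simultaneously take $a_1,a_2$, generating a public signal $y_1\sim\rho_1(\cdot\mid a_1,a_2)$. Assume: (i) $\rho_0(y_0\mid a_0)>0$ always; (ii) $\rho_1(y_1\mid a_1,a_2)>0$ implies $\rho_1(y_1\mid a_1,a_2')>0$; (iii) for every $a_2$ the vectors $(\rho_1(\cdot\mid a_1,a_2))_{a_1\in A_1}$ are linearly independent. Stage strategies: $\alpha_0\in\Delta(A_0)$, $\alpha_2\in\Delta(A_2)$, $s_1:Y_0\to\Delta(A_1)$; $\|\cdot\|$ is the sup norm. $\gamma(\alpha_0,s_1)[y_0,a_1]=\sum_{a_0}\alpha_0(a_0)\rho_0(y_0\mid a_0)s_1(y_0)[a_1]$ with marginals $\rho(\alpha_0)$ on $Y_0$ and $\phi(\alpha_0,s_1)$ on $A_1$; $p(\alpha_0,s_1,\alpha_2)[y_1]=\sum\alpha_0(a_0)\rho_0(y_0\mid a_0)s_1(y_0)[a_1]\alpha_2(a_2)\rho_1(y_1\mid a_1,a_2)$. Payoffs $u_0:A_0\times A_1\to\mathbb{R}$,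 $u_i:Y_0\times A_1\times A_2\to\mathbb{R}$ extended by expectation; $u_1(\cdot,\alpha_2)$ is $(y_0,a_1)\mapsto\sum_{a_2}\alpha_2(a_2)u_1(y_0,a_1,a_2)$. $B(s_1)$: set of $(\alpha_0,\alpha_2)$ with $\mathrm{supp}(\alpha_0)\subset\arg\max_{a_0}u_0(a_0,s_1)$, $\mathrm{supp}(\alpha_2)\subset\arg\max_{a_2}u_2(\alpha_0,s_1,a_2)$. $B_\eta(s_1)$ ($\eta\ge0$): set of $(\alpha_0,\alpha_2)$ with $(\alpha_0,\alpha_2)\in B(s_1')$ and $\|p(\alpha_0,s_1,\alpha_2)-p(\alpha_0,s_1',\alpha_2)\|\le\eta$ for some $s_1'$. Confound-defeating: $s_1^*$ satisfies at least one of (CD1) for every $\varepsilon>0$ there is $\eta>0$ such that for every $(\alpha_0,\alpha_2)\in B_\eta(s_1^* )$ and every $s_1'$ with $\|s_1'-s_1^*\|>\varepsilon$ and $\|p(\alpha_0,s_1',\alpha_2)-p(\alpha_0,s_1^*,\alpha_2)\|<\eta$ there is $\tilde s_1$ with $p(\alpha_0,\tilde s_1,\alpha_2)=p(\alpha_0,s_1',\alpha_2)$ and $u_1(\alpha_0,\tilde s_1,\alpha_2)>u_1(\alpha_0,s_1',\alpha_2)$; (CD2) for every $(\alpha_0,\alpha_2)\in B_0(s_1^* )$, $\gamma(\alpha_0,s_1^* )$ uniquely maximizes $\sum\gamma(y_0,a_1)u_1(y_0,a_1,\alpha_2)$ over $\gamma\in\Delta(Y_0\times A_1)$ with marginals $\rho(\alpha_0)$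 and $\phi(\alpha_0,s_1^* )$. $u_1$ is strictly supermodular with respect to $(\succsim_{Y_0},\succsim_{A_1})$ if $u_1(y_0,a_1,a_2)-u_1(y_0,a_1',a_2)>u_1(y_0',a_1,a_2)-u_1(y_0',a_1',a_2)$ for all $y_0\succ y_0'$, $a_1\succ a_1'$, $a_2$. $s_1$ is monotone if for any $y_0\succ y_0'$, $a_1\in\mathrm{supp}(s_1(y_0))$, $a_1'\in\mathrm{supp}(s_1(y_0'))$ we have $a_1\succsim a_1'$. For $u:Y_0\times A_1\to\mathbb{R}$, $S\subset Y_0\times A_1$ is $u$-cyclically monotone if for every finite $\{(x_i,y_i)\}_{i=1}^N\subset S$ ($y_{N+1}=y_1$), $\sum_iu(x_i,y_i)\ge\sum_iu(x_i,y_{i+1})$; $s_1$ is $u_1$-cyclically monotone if $\{(y_0,a_1):a_1\in\mathrm{supp}(s_1(y_0))\}$ is $u_1(\cdot,\alpha_2)$-cyclically monotone for all $\alpha_2\in\Delta(A_2)$. *)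

theory Defs
  imports Complex_Main
begin

(* Conventions:
   rho0 a0 y0      = rho_0(y0 | a0)
   rho1 a1 a2 y1   = rho_1(y1 | a1, a2)
   s1 y0 a1        = s_1(y0)[a1]
   all action/signal sets are finite types. *)

definition is_dist :: "('a::finite \<Rightarrow> real) \<Rightarrow> bool" where
  "is_dist \<alpha> \<longleftrightarrow> (\<forall>a. 0 \<le> \<alpha> a) \<and> (\<Sum>a\<in>UNIV. \<alpha> a) = 1"

definition is_strat :: "('y0::finite \<Rightarrow> 'a1::finite \<Rightarrow> real) \<Rightarrow> bool" where
  "is_strat s1 \<longleftrightarrow> (\<forall>y0. is_dist (s1 y0))"

definition supn :: "('x::finite \<Rightarrow> real) \<Rightarrow> real" where
  "supn f = Max (range (\<lambda>x. \<bar>f x\<bar>))"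

definition strat_dist :: "('y0::finite \<Rightarrow> 'a1::finite \<Rightarrow> real) \<Rightarrow> ('y0 \<Rightarrow> 'a1 \<Rightarrow> real) \<Rightarrow> real" where
  "strat_dist s s' = supn (\<lambda>(y0, a1). s y0 a1 - s' y0 a1)"

definition gam :: "('a0::finite \<Rightarrow> 'y0::finite \<Rightarrow> real) \<Rightarrow> ('a0 \<Rightarrow> real)
    \<Rightarrow> ('y0 \<Rightarrow> 'a1::finite \<Rightarrow> real) \<Rightarrow> 'y0 \<Rightarrow> 'a1 \<Rightarrow> real" where
  "gam rho0 \<alpha>0 s1 y0 a1 = (\<Sum>a0\<in>UNIV. \<alpha>0 a0 * rho0 a0 y0 * s1 y0 a1)"

definition rho_marg :: "('a0::finite \<Rightarrow> 'y0::finite \<Rightarrow> real) \<Rightarrow> ('a0 \<Rightarrow> real) \<Rightarrow> 'y0 \<Rightarrow> real" where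
  "rho_marg rho0 \<alpha>0 y0 = (\<Sum>a0\<in>UNIV. \<alpha>0 a0 * rho0 a0 y0)"

definition phi :: "('a0::finite \<Rightarrow> 'y0::finite \<Rightarrow> real) \<Rightarrow> ('a0 \<Rightarrow> real)
    \<Rightarrow> ('y0 \<Rightarrow> 'a1::finite \<Rightarrow> real) \<Rightarrow> 'a1 \<Rightarrow> real" where
  "phi rho0 \<alpha>0 s1 a1 = (\<Sum>y0\<in>UNIV. gam rho0 \<alpha>0 s1 y0 a1)"

definition pdist :: "('a0::finite \<Rightarrow> 'y0::finite \<Rightarrow> real) \<Rightarrow> ('a1::finite \<Rightarrow> 'a2::finite \<Rightarrow> 'y1 \<Rightarrow> real)
    \<Rightarrow> ('a0 \<Rightarrow> real) \<Rightarrow> ('y0 \<Rightarrow> 'a1 \<Rightarrow> real) \<Rightarrow> ('a2 \<Rightarrow> real) \<Rightarrow> 'y1 \<Rightarrow> real" where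
  "pdist rho0 rho1 \<alpha>0 s1 \<alpha>2 y1 =
     (\<Sum>a0\<in>UNIV. \<Sum>y0\<in>UNIV. \<Sum>a1\<in>UNIV. \<Sum>a2\<in>UNIV.
        \<alpha>0 a0 * rho0 a0 y0 * s1 y0 a1 * \<alpha>2 a2 * rho1 a1 a2 y1)"

definition u0_ext :: "('a0::finite \<Rightarrow> 'y0::finite \<Rightarrow> real) \<Rightarrow> ('a0 \<Rightarrow> 'a1::finite \<Rightarrow> real)
    \<Rightarrow> 'a0 \<Rightarrow> ('y0 \<Rightarrow> 'a1 \<Rightarrow> real) \<Rightarrow> real" where
  "u0_ext rho0 u0 a0 s1 = (\<Sum>y0\<in>UNIV. \<Sum>a1\<in>UNIV. rho0 a0 y0 * s1 y0 a1 * u0 a0 a1)"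

definition ui_ext :: "('a0::finite \<Rightarrow> 'y0::finite \<Rightarrow> real) \<Rightarrow> ('y0 \<Rightarrow> 'a1::finite \<Rightarrow> 'a2::finite \<Rightarrow> real)
    \<Rightarrow> ('a0 \<Rightarrow> real) \<Rightarrow> ('y0 \<Rightarrow> 'a1 \<Rightarrow> real) \<Rightarrow> ('a2 \<Rightarrow> real) \<Rightarrow> real" where
  "ui_ext rho0 u \<alpha>0 s1 \<alpha>2 =
     (\<Sum>a0\<in>UNIV. \<Sum>y0\<in>UNIV. \<Sum>a1\<in>UNIV. \<Sum>a2\<in>UNIV.
        \<alpha>0 a0 * rho0 a0 y0 * s1 y0 a1 * \<alpha>2 a2 * u y0 a1 a2)"

definition pt :: "'a \<Rightarrow> 'a \<Rightarrow> real" where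
  "pt a = (\<lambda>b. if b = a then 1 else 0)"

definition u_avg :: "('y0 \<Rightarrow> 'a1 \<Rightarrow> 'a2::finite \<Rightarrow> real) \<Rightarrow> ('a2 \<Rightarrow> real) \<Rightarrow> 'y0 \<Rightarrow> 'a1 \<Rightarrow> real" where
  "u_avg u \<alpha>2 y0 a1 = (\<Sum>a2\<in>UNIV. \<alpha>2 a2 * u y0 a1 a2)"

definition BR :: "('a0::finite \<Rightarrow> 'y0::finite \<Rightarrow> real) \<Rightarrow> ('a0 \<Rightarrow> 'a1::finite \<Rightarrow> real)
    \<Rightarrow> ('y0 \<Rightarrow> 'a1 \<Rightarrow> 'a2::finite \<Rightarrow> real) \<Rightarrow> ('y0 \<Rightarrow> 'a1 \<Rightarrow> real)
    \<Rightarrow> (('a0 \<Rightarrow> real) \<times> ('a2 \<Rightarrow> real)) set" where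
  "BR rho0 u0 u2 s1 = {(\<alpha>0, \<alpha>2). is_dist \<alpha>0 \<and> is_dist \<alpha>2 \<and>
      (\<forall>a0. 0 < \<alpha>0 a0 \<longrightarrow> (\<forall>b0. u0_ext rho0 u0 b0 s1 \<le> u0_ext rho0 u0 a0 s1)) \<and>
      (\<forall>a2. 0 < \<alpha>2 a2 \<longrightarrow>
         (\<forall>b2. ui_ext rho0 u2 \<alpha>0 s1 (pt b2) \<le> ui_ext rho0 u2 \<alpha>0 s1 (pt a2)))}"

definition B_eta :: "('a0::finite \<Rightarrow> 'y0::finite \<Rightarrow> real) \<Rightarrow> ('a1::finite \<Rightarrow> 'a2::finite \<Rightarrow> 'y1::finite \<Rightarrow> real)
    \<Rightarrow> ('a0 \<Rightarrow> 'a1 \<Rightarrow> real) \<Rightarrow> ('y0 \<Rightarrow> 'a1 \<Rightarrow> 'a2 \<Rightarrow> real) \<Rightarrow> real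
    \<Rightarrow> ('y0 \<Rightarrow> 'a1 \<Rightarrow> real) \<Rightarrow> (('a0 \<Rightarrow> real) \<times> ('a2 \<Rightarrow> real)) set" where
  "B_eta rho0 rho1 u0 u2 \<eta> s1 = {(\<alpha>0, \<alpha>2). \<exists>s1'. is_strat s1' \<and> (\<alpha>0, \<alpha>2) \<in> BR rho0 u0 u2 s1' \<and>
      supn (\<lambda>y1. pdist rho0 rho1 \<alpha>0 s1 \<alpha>2 y1 - pdist rho0 rho1 \<alpha>0 s1' \<alpha>2 y1) \<le> \<eta>}"

definition CD1 where
  "CD1 rho0 rho1 u0 u1 u2 s1 \<longleftrightarrow>
    (\<forall>\<epsilon>>0. \<exists>\<eta>>0. \<forall>\<alpha>0 \<alpha>2. (\<alpha>0, \<alpha>2) \<in> B_eta rho0 rho1 u0 u2 \<eta> s1 \<longrightarrow>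
       (\<forall>s1'. is_strat s1' \<and> strat_dist s1' s1 > \<epsilon> \<and>
          supn (\<lambda>y1. pdist rho0 rho1 \<alpha>0 s1' \<alpha>2 y1 - pdist rho0 rho1 \<alpha>0 s1 \<alpha>2 y1) < \<eta> \<longrightarrow>
          (\<exists>st. is_strat st \<and> pdist rho0 rho1 \<alpha>0 st \<alpha>2 = pdist rho0 rho1 \<alpha>0 s1' \<alpha>2 \<and>
                ui_ext rho0 u1 \<alpha>0 st \<alpha>2 > ui_ext rho0 u1 \<alpha>0 s1' \<alpha>2)))"

definition couplings :: "('y0::finite \<Rightarrow> real) \<Rightarrow> ('a1::finite \<Rightarrow> real) \<Rightarrow> ('y0 \<Rightarrow> 'a1 \<Rightarrow> real) set" where
  "couplings m1 m2 = {g. (\<forall>y a. 0 \<le> g y a) \<and> (\<Sum>y\<in>UNIV. \<Sum>a\<in>UNIV. g y a) = 1 \<and>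
      (\<forall>y. (\<Sum>a\<in>UNIV. g y a) = m1 y) \<and> (\<forall>a. (\<Sum>y\<in>UNIV. g y a) = m2 a)}"

definition CD2 where
  "CD2 rho0 rho1 u0 u1 u2 s1 \<longleftrightarrow>
    (\<forall>\<alpha>0 \<alpha>2. (\<alpha>0, \<alpha>2) \<in> B_eta rho0 rho1 u0 u2 0 s1 \<longrightarrow>
       (let gs = gam rho0 \<alpha>0 s1;
            C = couplings (rho_marg rho0 \<alpha>0) (phi rho0 \<alpha>0 s1);
            val = (\<lambda>g. \<Sum>y0\<in>UNIV. \<Sum>a1\<in>UNIV. g y0 a1 * u_avg u1 \<alpha>2 y0 a1)
        in gs \<in> C \<and> (\<forall>g\<in>C. g \<noteq> gs \<longrightarrow> val g < val gs)))"

definition confound_defeating where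
  "confound_defeating rho0 rho1 u0 u1 u2 s1 \<longleftrightarrow>
     CD1 rho0 rho1 u0 u1 u2 s1 \<or> CD2 rho0 rho1 u0 u1 u2 s1"

text \<open>strict part of a (total order) relation r, where (x, y) \<in> r means x \<succsim> y\<close>
definition strict :: "'a rel \<Rightarrow> 'a \<Rightarrow> 'a \<Rightarrow> bool" where
  "strict r x y \<longleftrightarrow> (x, y) \<in> r \<and> x \<noteq> y"

definition strictly_supermodular :: "'y0 rel \<Rightarrow> 'a1 rel \<Rightarrow> ('y0 \<Rightarrow> 'a1 \<Rightarrow> 'a2 \<Rightarrow> real) \<Rightarrow> bool" where
  "strictly_supermodular rY rA u \<longleftrightarrow>
     (\<forall>y0 y0' a1 a1' a2. strict rY y0 y0' \<and> strict rA a1 a1' \<longrightarrow>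
        u y0 a1 a2 - u y0 a1' a2 > u y0' a1 a2 - u y0' a1' a2)"

definition monotone_strat :: "'y0 rel \<Rightarrow> 'a1 rel \<Rightarrow> ('y0 \<Rightarrow> 'a1 \<Rightarrow> real) \<Rightarrow> bool" where
  "monotone_strat rY rA s1 \<longleftrightarrow>
     (\<forall>y0 y0' a1 a1'. strict rY y0 y0' \<and> 0 < s1 y0 a1 \<and> 0 < s1 y0' a1' \<longrightarrow> (a1, a1') \<in> rA)"

definition cyc_monotone :: "('x \<Rightarrow> 'y \<Rightarrow> real) \<Rightarrow> ('x \<times> 'y) set \<Rightarrow> bool" where
  "cyc_monotone u S \<longleftrightarrow>
     (\<forall>N::nat. \<forall>x y. N \<ge> 1 \<and> (\<forall>i<N. (x i, y i) \<in> S) \<longrightarrow>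
        (\<Sum>i<N. u (x i) (y i)) \<ge> (\<Sum>i<N. u (x i) (y (Suc i mod N))))"

definition supp_graph :: "('y0 \<Rightarrow> 'a1 \<Rightarrow> real) \<Rightarrow> ('y0 \<times> 'a1) set" where
  "supp_graph s1 = {(y0, a1). 0 < s1 y0 a1}"

definition u_cyc_monotone_strat :: "('y0 \<Rightarrow> 'a1 \<Rightarrow> 'a2::finite \<Rightarrow> real) \<Rightarrow> ('y0 \<Rightarrow> 'a1 \<Rightarrow> real) \<Rightarrow> bool" where
  "u_cyc_monotone_strat u1 s1 \<longleftrightarrow>
     (\<forall>\<alpha>2. is_dist \<alpha>2 \<longrightarrow> cyc_monotone (u_avg u1 \<alpha>2) (supp_graph s1))"

end

theory Submission
  imports Defs "HOL-Analysis.Analysis"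
begin


lemma lin_facts:
  assumes "linear_order r"
  shows "(x,x) \<in> r" "trans r" "antisym r" "(x,y) \<in> r \<or> (y,x) \<in> r"
  using assms by (auto simp: linear_order_on_def partial_order_on_def preorder_on_def refl_on_def total_on_def) metis

lemma lin_min:
  assumes lr: "linear_order r" and "finite S" "S \<noteq> {}"
  shows "\<exists>m\<in>S. \<forall>x\<in>S. (x, m) \<in> r"
  using assms(2,3)
proof (induction rule: finite_ne_induct)
  case (singleton x) then show ?case using lin_facts(1)[OF lr] by auto
next
  case (insert x F)
  then obtain m where m: "m\<in>F" "\<forall>y\<in>F. (y,m)\<in>r" by auto
  show ?case
  proof (cases "(x,m) \<in> r")
    case True then show ?thesis using m lin_facts(1)[OF lr] by auto
  next
    case False
    then have "(m,x) \<in> r" using lin_facts(4)[OF lr, of x m] by auto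
    then have "\<forall>y\<in>F. (y,x)\<in>r" using m lin_facts(2)[OF lr] by (meson transD)
    then show ?thesis using lin_facts(1)[OF lr] by auto
  qed
qed

lemma transfer:
  fixes g u :: "'a \<Rightarrow> 'b \<Rightarrow> real"
  assumes fin: "finite I" "finite J" and i0: "i0 \<in> I" and j0: "j0 \<in> J"
  and gnn: "\<forall>i\<in>I. \<forall>j\<in>J. 0 \<le> g i j"
  and dl: "0 \<le> \<delta>" and dR: "\<delta> \<le> (\<Sum>j\<in>J-{j0}. g i0 j)" and dC: "\<delta> \<le> (\<Sum>i\<in>I-{i0}. g i j0)"
  and sm: "\<forall>i\<in>I-{i0}. \<forall>j\<in>J-{j0}. u i j + u i0 j0 > u i j0 + u i0 j"
  shows "\<exists>g'. (\<forall>i\<in>I. \<forall>j\<in>J. 0 \<le> g' i j) \<and> (\<forall>i\<in>I. (\<Sum>j\<in>J. g' i j) = (\<Sum>j\<in>J. g i j))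
     \<and> (\<forall>j\<in>J. (\<Sum>i\<in>I. g' i j) = (\<Sum>i\<in>I. g i j)) \<and> g' i0 j0 = g i0 j0 + \<delta>
     \<and> (\<Sum>i\<in>I. \<Sum>j\<in>J. g i j * u i j) \<le> (\<Sum>i\<in>I. \<Sum>j\<in>J. g' i j * u i j)
     \<and> ((\<Sum>i\<in>I. \<Sum>j\<in>J. g i j * u i j) = (\<Sum>i\<in>I. \<Sum>j\<in>J. g' i j * u i j) \<longrightarrow> (\<forall>i\<in>I. \<forall>j\<in>J. g' i j = g i j))"
proof (cases "\<delta> = 0")
  case True then show ?thesis using gnn by (intro exI[of _ g]) auto
next
  case False
  hence dpos: "\<delta> > 0" using dl by simp
  define R where "R = (\<Sum>j\<in>J-{j0}. g i0 j)"
  define C where "C = (\<Sum>i\<in>I-{i0}. g i j0)"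
  have Rpos: "R > 0" "C > 0" using dR dC dpos R_def C_def by auto
  define mu where "mu j = g i0 j * \<delta> / R" for j
  define lam where "lam i = g i j0 * \<delta> / C" for i
  define D where "D i j = (if i = i0 then (if j = j0 then \<delta> else - mu j) else (if j = j0 then - lam i else lam i * mu j / \<delta>))" for i j
  define g' where "g' i j = g i j + D i j" for i j
  have summu: "(\<Sum>j\<in>J-{j0}. mu j) = \<delta>"
    unfolding mu_def using Rpos by (simp add: sum_divide_distrib[symmetric] sum_distrib_right[symmetric] R_def[symmetric])
  have sumlam: "(\<Sum>i\<in>I-{i0}. lam i) = \<delta>"
    unfolding lam_def using Rpos by (simp add: sum_divide_distrib[symmetric] sum_distrib_right[symmetric] C_def[symmetric])
  have mu_nn: "\<forall>j\<in>J. 0 \<le> mu j" unfolding mu_def using gnn i0 Rpos dl by auto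
  have lam_nn: "\<forall>i\<in>I. 0 \<le> lam i" unfolding lam_def using gnn j0 Rpos dl by auto
  have mu_le: "\<forall>j\<in>J. mu j \<le> g i0 j"
  proof
    fix j assume "j \<in> J"
    have "g i0 j * \<delta> \<le> g i0 j * R" using dR R_def gnn i0 \<open>j\<in>J\<close> by (simp add: mult_left_mono)
    then show "mu j \<le> g i0 j" unfolding mu_def using Rpos by (simp add: divide_le_eq)
  qed
  have lam_le: "\<forall>i\<in>I. lam i \<le> g i j0"
  proof
    fix i assume "i \<in> I"
    have "g i j0 * \<delta> \<le> g i j0 * C" using dC C_def gnn j0 \<open>i\<in>I\<close> by (simp add: mult_left_mono)
    then show "lam i \<le> g i j0" unfolding lam_def using Rpos by (simp add: divide_le_eq)
  qed
  have nn: "\<forall>i\<in>I. \<forall>j\<in>J. 0 \<le> g' i j"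
    unfolding g'_def D_def using gnn mu_le lam_le mu_nn lam_nn dl by auto
  have rowD: "(\<Sum>j\<in>J. D i j) = 0" if "i \<in> I" for i
  proof -
    have "(\<Sum>j\<in>J. D i j) = D i j0 + (\<Sum>j\<in>J-{j0}. D i j)" using sum.remove[OF fin(2) j0] by blast
    also have "\<dots> = 0"
    proof (cases "i = i0")
      case True then show ?thesis unfolding D_def using summu by (simp add: sum_negf)
    next
      case False
      have "(\<Sum>j\<in>J-{j0}. D i j) = (\<Sum>j\<in>J-{j0}. lam i * mu j / \<delta>)" unfolding D_def using False by simp
      also have "\<dots> = lam i * (\<Sum>j\<in>J-{j0}. mu j) / \<delta>" by (simp add: sum_divide_distrib[symmetric] sum_distrib_left[symmetric])
      also have "\<dots> = lam i" using summu dpos by simp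
      finally show ?thesis unfolding D_def using False by simp
    qed
    finally show ?thesis .
  qed
  have colD: "(\<Sum>i\<in>I. D i j) = 0" if "j \<in> J" for j
  proof -
    have "(\<Sum>i\<in>I. D i j) = D i0 j + (\<Sum>i\<in>I-{i0}. D i j)" using sum.remove[OF fin(1) i0] by blast
    also have "\<dots> = 0"
    proof (cases "j = j0")
      case True then show ?thesis unfolding D_def using sumlam by (simp add: sum_negf)
    next
      case False
      have "(\<Sum>i\<in>I-{i0}. D i j) = (\<Sum>i\<in>I-{i0}. lam i * mu j / \<delta>)" unfolding D_def using False by simp
      also have "\<dots> = (\<Sum>i\<in>I-{i0}. lam i) * mu j / \<delta>" by (simp add: sum_divide_distrib[symmetric] sum_distrib_right[symmetric])
      also have "\<dots> = mu j" using sumlam dpos by simp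
      finally show ?thesis unfolding D_def using False by simp
    qed
    finally show ?thesis .
  qed
  define B where "B i j = u i j + u i0 j0 - u i j0 - u i0 j" for i j
  have valD: "(\<Sum>i\<in>I. \<Sum>j\<in>J. D i j * u i j) = (\<Sum>i\<in>I-{i0}. \<Sum>j\<in>J-{j0}. lam i * mu j / \<delta> * B i j)"
  proof -
    have e1: "(\<Sum>j\<in>J. D i j * u i j) = D i j0 * u i j0 + (\<Sum>j\<in>J-{j0}. D i j * u i j)" for i
      using sum.remove[OF fin(2) j0] by blast
    have "(\<Sum>i\<in>I. \<Sum>j\<in>J. D i j * u i j) = (\<Sum>j\<in>J. D i0 j * u i0 j) + (\<Sum>i\<in>I-{i0}. \<Sum>j\<in>J. D i j * u i j)"
      using sum.remove[OF fin(1) i0] by blast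
    also have "\<dots> = (\<delta> * u i0 j0 - (\<Sum>j\<in>J-{j0}. mu j * u i0 j)) + (\<Sum>i\<in>I-{i0}. (- lam i * u i j0) + (\<Sum>j\<in>J-{j0}. lam i * mu j / \<delta> * u i j))"
      unfolding e1 by (simp add: D_def sum_negf)
    also have "\<dots> = (\<Sum>i\<in>I-{i0}. \<Sum>j\<in>J-{j0}. lam i * mu j / \<delta> * B i j)"
    proof -
      have a1: "(\<Sum>i\<in>I-{i0}. \<Sum>j\<in>J-{j0}. lam i * mu j / \<delta> * u i0 j0) = \<delta> * u i0 j0"
      proof -
        have "(\<Sum>i\<in>I-{i0}. \<Sum>j\<in>J-{j0}. lam i * mu j / \<delta> * u i0 j0) = (\<Sum>i\<in>I-{i0}. lam i * u i0 j0)"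
        proof (rule sum.cong[OF refl])
          fix i
          have "(\<Sum>j\<in>J-{j0}. lam i * mu j / \<delta> * u i0 j0) = lam i * (\<Sum>j\<in>J-{j0}. mu j) / \<delta> * u i0 j0"
            by (simp add: sum_distrib_left sum_distrib_right sum_divide_distrib mult.assoc)
          then show "(\<Sum>j\<in>J-{j0}. lam i * mu j / \<delta> * u i0 j0) = lam i * u i0 j0" using summu dpos by simp
        qed
        also have "\<dots> = (\<Sum>i\<in>I-{i0}. lam i) * u i0 j0" by (simp add: sum_distrib_right)
        finally show ?thesis using sumlam by simp
      qed
      have a2: "(\<Sum>i\<in>I-{i0}. \<Sum>j\<in>J-{j0}. lam i * mu j / \<delta> * u i j0) = (\<Sum>i\<in>I-{i0}. lam i * u i j0)"
      proof (rule sum.cong[OF refl])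
        fix i
        have "(\<Sum>j\<in>J-{j0}. lam i * mu j / \<delta> * u i j0) = lam i * (\<Sum>j\<in>J-{j0}. mu j) / \<delta> * u i j0"
          by (simp add: sum_distrib_left sum_distrib_right sum_divide_distrib mult.assoc)
        then show "(\<Sum>j\<in>J-{j0}. lam i * mu j / \<delta> * u i j0) = lam i * u i j0" using summu dpos by simp
      qed
      have a3: "(\<Sum>i\<in>I-{i0}. \<Sum>j\<in>J-{j0}. lam i * mu j / \<delta> * u i0 j) = (\<Sum>j\<in>J-{j0}. mu j * u i0 j)"
      proof -
        have "(\<Sum>i\<in>I-{i0}. \<Sum>j\<in>J-{j0}. lam i * mu j / \<delta> * u i0 j) = (\<Sum>j\<in>J-{j0}. \<Sum>i\<in>I-{i0}. lam i * mu j / \<delta> * u i0 j)"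
          by (rule sum.swap)
        also have "\<dots> = (\<Sum>j\<in>J-{j0}. mu j * u i0 j)"
        proof (rule sum.cong[OF refl])
          fix j
          have "(\<Sum>i\<in>I-{i0}. lam i * mu j / \<delta> * u i0 j) = (\<Sum>i\<in>I-{i0}. lam i) * mu j / \<delta> * u i0 j"
            by (simp add: sum_distrib_left sum_distrib_right sum_divide_distrib mult.assoc)
          then show "(\<Sum>i\<in>I-{i0}. lam i * mu j / \<delta> * u i0 j) = mu j * u i0 j" using sumlam dpos by simp
        qed
        finally show ?thesis .
      qed
      have "(\<Sum>i\<in>I-{i0}. \<Sum>j\<in>J-{j0}. lam i * mu j / \<delta> * B i j) =
         (\<Sum>i\<in>I-{i0}. \<Sum>j\<in>J-{j0}. lam i * mu j / \<delta> * u i j) + (\<Sum>i\<in>I-{i0}. \<Sum>j\<in>J-{j0}. lam i * mu j / \<delta> * u i0 j0)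
         - (\<Sum>i\<in>I-{i0}. \<Sum>j\<in>J-{j0}. lam i * mu j / \<delta> * u i j0) - (\<Sum>i\<in>I-{i0}. \<Sum>j\<in>J-{j0}. lam i * mu j / \<delta> * u i0 j)"
      proof -
        have pw: "lam i * mu j / \<delta> * B i j = lam i * mu j / \<delta> * u i j + lam i * mu j / \<delta> * u i0 j0 - lam i * mu j / \<delta> * u i j0 - lam i * mu j / \<delta> * u i0 j" for i j
          unfolding B_def by (simp add: diff_divide_distrib add_divide_distrib right_diff_distrib distrib_left)
        show ?thesis by (simp only: pw sum.distrib sum_subtractf)
      qed
      then show ?thesis using a1 a2 a3 by (simp add: sum.distrib sum_negf sum_subtractf)
    qed
    finally show ?thesis .
  qed
  obtain j1 where j1: "j1 \<in> J-{j0}" "mu j1 > 0"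
  proof (rule ccontr)
    assume "\<not> thesis"
    then have "\<forall>j\<in>J-{j0}. mu j \<le> 0" using that by force
    then have "(\<Sum>j\<in>J-{j0}. mu j) \<le> 0" by (meson sum_nonpos)
    then show False using summu dpos by simp
  qed
  obtain i1 where i1: "i1 \<in> I-{i0}" "lam i1 > 0"
  proof (rule ccontr)
    assume "\<not> thesis"
    then have "\<forall>i\<in>I-{i0}. lam i \<le> 0" using that by force
    then have "(\<Sum>i\<in>I-{i0}. lam i) \<le> 0" by (meson sum_nonpos)
    then show False using sumlam dpos by simp
  qed
  have Bpos: "\<forall>i\<in>I-{i0}. \<forall>j\<in>J-{j0}. B i j > 0" using sm unfolding B_def by (smt (verit))
  have term_nn: "0 \<le> lam i * mu j / \<delta> * B i j" if "i\<in>I-{i0}" "j\<in>J-{j0}" for i j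
  proof -
    have "0 \<le> lam i" "0 \<le> mu j" "0 \<le> B i j" using that lam_nn mu_nn Bpos by (auto simp: less_imp_le)
    then show ?thesis using dpos by simp
  qed
  have inner_nn: "\<forall>i\<in>I-{i0}. 0 \<le> (\<Sum>j\<in>J-{j0}. lam i * mu j / \<delta> * B i j)"
    using term_nn by (meson sum_nonneg)
  have inner_pos: "0 < (\<Sum>j\<in>J-{j0}. lam i1 * mu j / \<delta> * B i1 j)"
    apply (rule sum_pos2[OF _ j1(1)])
    using fin apply simp
    using j1 i1 Bpos dpos apply simp
    using term_nn i1 by blast
  have "0 < (\<Sum>i\<in>I-{i0}. \<Sum>j\<in>J-{j0}. lam i * mu j / \<delta> * B i j)"
    apply (rule sum_pos2[where i=i1])
    using fin i1 inner_pos inner_nn by auto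
  then have valpos: "0 < (\<Sum>i\<in>I. \<Sum>j\<in>J. D i j * u i j)" using valD by simp
  have valsplit: "(\<Sum>i\<in>I. \<Sum>j\<in>J. g' i j * u i j) = (\<Sum>i\<in>I. \<Sum>j\<in>J. g i j * u i j) + (\<Sum>i\<in>I. \<Sum>j\<in>J. D i j * u i j)"
    unfolding g'_def by (simp add: algebra_simps sum.distrib)
  show ?thesis
  proof (intro exI[of _ g'] conjI)
    show "\<forall>i\<in>I. \<forall>j\<in>J. 0 \<le> g' i j" by (rule nn)
    show "\<forall>i\<in>I. (\<Sum>j\<in>J. g' i j) = (\<Sum>j\<in>J. g i j)" using rowD unfolding g'_def by (simp add: sum.distrib)
    show "\<forall>j\<in>J. (\<Sum>i\<in>I. g' i j) = (\<Sum>i\<in>I. g i j)" using colD unfolding g'_def by (simp add: sum.distrib)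
    show "g' i0 j0 = g i0 j0 + \<delta>" unfolding g'_def D_def by simp
  qed (use valsplit valpos in auto)
qed

lemma sum_nn_zero:
  fixes f :: "'a \<Rightarrow> real"
  assumes "finite S" "\<forall>x\<in>S. 0 \<le> f x" "sum f S = 0" "x \<in> S"
  shows "f x = 0"
  using assms sum_nonneg_eq_0_iff by blast

lemma ot_main:
  fixes g h u :: "'a \<Rightarrow> 'b \<Rightarrow> real"
  assumes lI: "linear_order rI" and lJ: "linear_order rJ"
  and sm: "\<And>i i' j j'. strict rI i' i \<Longrightarrow> strict rJ j' j \<Longrightarrow> u i j + u i' j' > u i j' + u i' j"
  and comon: "\<And>i i' j j'. strict rI i' i \<Longrightarrow> 0 < h i j \<Longrightarrow> 0 < h i' j' \<Longrightarrow> (j', j) \<in> rJ"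
  shows "finite I \<Longrightarrow> finite J \<Longrightarrow> \<forall>i\<in>I. \<forall>j\<in>J. 0 \<le> g i j \<Longrightarrow> \<forall>i\<in>I. \<forall>j\<in>J. 0 \<le> h i j
    \<Longrightarrow> \<forall>i\<in>I. (\<Sum>j\<in>J. g i j) = (\<Sum>j\<in>J. h i j) \<Longrightarrow> \<forall>j\<in>J. (\<Sum>i\<in>I. g i j) = (\<Sum>i\<in>I. h i j)
    \<Longrightarrow> (\<Sum>i\<in>I. \<Sum>j\<in>J. g i j * u i j) \<le> (\<Sum>i\<in>I. \<Sum>j\<in>J. h i j * u i j)
       \<and> ((\<Sum>i\<in>I. \<Sum>j\<in>J. g i j * u i j) = (\<Sum>i\<in>I. \<Sum>j\<in>J. h i j * u i j) \<longrightarrow> (\<forall>i\<in>I. \<forall>j\<in>J. g i j = h i j))"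
proof (induction "card I + card J" arbitrary: I J g rule: less_induct)
  case less
  note finI = less.prems(1) and finJ = less.prems(2) and gnn = less.prems(3) and hnn = less.prems(4)
    and rows = less.prems(5) and cols = less.prems(6)
  show ?case
  proof (cases "I = {} \<or> J = {}")
    case True then show ?thesis by auto
  next
    case False
    obtain i0 where i0: "i0\<in>I" "\<forall>i\<in>I. (i,i0)\<in>rI" using lin_min[OF lI finI] False by auto
    obtain j0 where j0: "j0\<in>J" "\<forall>j\<in>J. (j,j0)\<in>rJ" using lin_min[OF lJ finJ] False by auto
    have strI: "strict rI i i0" if "i\<in>I" "i \<noteq> i0" for i using that i0 by (simp add: strict_def)
    have strJ: "strict rJ j j0" if "j\<in>J" "j \<noteq> j0" for j using that j0 by (simp add: strict_def)
    have corner: "(\<forall>j\<in>J-{j0}. h i0 j = 0) \<or> (\<forall>i\<in>I-{i0}. h i j0 = 0)"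
    proof (rule ccontr)
      assume "\<not> ?thesis"
      then obtain j i where ji: "j\<in>J" "j\<noteq>j0" "h i0 j \<noteq> 0" "i\<in>I" "i\<noteq>i0" "h i j0 \<noteq> 0" by auto
      have "0 \<le> h i0 j" "0 \<le> h i j0" using hnn i0 j0 ji by auto
      with ji have p: "0 < h i0 j" "0 < h i j0" by (simp_all add: less_le)
      from comon[OF strI[OF ji(4,5)] p] have "(j0,j)\<in>rJ" .
      moreover have "(j,j0) \<in> rJ" using j0 ji by auto
      ultimately have "j = j0" using lin_facts(3)[OF lJ] by (auto dest: antisymD)
      then show False using ji by simp
    qed
    define \<delta> where "\<delta> = h i0 j0 - g i0 j0"
    have gr: "g i0 j0 + (\<Sum>j\<in>J-{j0}. g i0 j) = (\<Sum>j\<in>J. h i0 j)"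
      using sum.remove[OF finJ j0(1), of "g i0"] rows i0 by simp
    have gc: "g i0 j0 + (\<Sum>i\<in>I-{i0}. g i j0) = (\<Sum>i\<in>I. h i j0)"
      using sum.remove[OF finI i0(1), of "\<lambda>i. g i j0"] cols j0 by simp
    have hr: "h i0 j0 + (\<Sum>j\<in>J-{j0}. h i0 j) = (\<Sum>j\<in>J. h i0 j)"
      using sum.remove[OF finJ j0(1), of "h i0"] by simp
    have hc: "h i0 j0 + (\<Sum>i\<in>I-{i0}. h i j0) = (\<Sum>i\<in>I. h i j0)"
      using sum.remove[OF finI i0(1), of "\<lambda>i. h i j0"] by simp
    have hrn: "0 \<le> (\<Sum>j\<in>J-{j0}. h i0 j)" using hnn i0 by (intro sum_nonneg) auto
    have hcn: "0 \<le> (\<Sum>i\<in>I-{i0}. h i j0)" using hnn j0 by (intro sum_nonneg) auto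
    have grn: "0 \<le> (\<Sum>j\<in>J-{j0}. g i0 j)" using gnn i0 by (intro sum_nonneg) auto
    have gcn: "0 \<le> (\<Sum>i\<in>I-{i0}. g i j0)" using gnn j0 by (intro sum_nonneg) auto
    have dprops: "0 \<le> \<delta> \<and> \<delta> \<le> (\<Sum>j\<in>J-{j0}. g i0 j) \<and> \<delta> \<le> (\<Sum>i\<in>I-{i0}. g i j0)"
      using corner
    proof
      assume "\<forall>j\<in>J-{j0}. h i0 j = 0"
      then have "(\<Sum>j\<in>J-{j0}. h i0 j) = 0" by simp
      then show ?thesis using gr gc hr hc hcn grn unfolding \<delta>_def by linarith
    next
      assume "\<forall>i\<in>I-{i0}. h i j0 = 0"
      then have "(\<Sum>i\<in>I-{i0}. h i j0) = 0" by simp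
      then show ?thesis using gr gc hr hc hrn gcn unfolding \<delta>_def by linarith
    qed
    have smc: "\<forall>i\<in>I-{i0}. \<forall>j\<in>J-{j0}. u i j + u i0 j0 > u i j0 + u i0 j"
    proof (intro ballI)
      fix i j assume "i\<in>I-{i0}" "j\<in>J-{j0}"
      then have "u i0 j0 + u i j > u i0 j + u i j0" using sm[OF strI strJ] by auto
      then show "u i j + u i0 j0 > u i j0 + u i0 j" by simp
    qed
    obtain g' where g': "\<forall>i\<in>I. \<forall>j\<in>J. 0 \<le> g' i j" "\<forall>i\<in>I. (\<Sum>j\<in>J. g' i j) = (\<Sum>j\<in>J. g i j)"
     "\<forall>j\<in>J. (\<Sum>i\<in>I. g' i j) = (\<Sum>i\<in>I. g i j)" "g' i0 j0 = g i0 j0 + \<delta>"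
     "(\<Sum>i\<in>I. \<Sum>j\<in>J. g i j * u i j) \<le> (\<Sum>i\<in>I. \<Sum>j\<in>J. g' i j * u i j)"
     "(\<Sum>i\<in>I. \<Sum>j\<in>J. g i j * u i j) = (\<Sum>i\<in>I. \<Sum>j\<in>J. g' i j * u i j) \<longrightarrow> (\<forall>i\<in>I. \<forall>j\<in>J. g' i j = g i j)"
      using transfer[OF finI finJ i0(1) j0(1) gnn _ _ _ smc] dprops by blast
    have g'00: "g' i0 j0 = h i0 j0" using g'(4) \<delta>_def by simp
    have g'r: "\<forall>i\<in>I. (\<Sum>j\<in>J. g' i j) = (\<Sum>j\<in>J. h i j)" using g'(2) rows by simp
    have g'c: "\<forall>j\<in>J. (\<Sum>i\<in>I. g' i j) = (\<Sum>i\<in>I. h i j)" using g'(3) cols by simp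
    let ?V = "\<lambda>f. (\<Sum>i\<in>I. \<Sum>j\<in>J. f i j * u i j)"
    have key: "?V g' \<le> ?V h \<and> (?V g' = ?V h \<longrightarrow> (\<forall>i\<in>I. \<forall>j\<in>J. g' i j = h i j))"
      using corner
    proof
      assume hz: "\<forall>j\<in>J-{j0}. h i0 j = 0"
      have g'r0: "(\<Sum>j\<in>J. g' i0 j) = g' i0 j0 + (\<Sum>j\<in>J-{j0}. g' i0 j)"
        using sum.remove[OF finJ j0(1), of "g' i0"] by simp
      have s0: "(\<Sum>j\<in>J-{j0}. g' i0 j) = 0" using g'r0 g'r i0 hr hz g'00 by simp
      have nn0: "\<forall>j\<in>J-{j0}. 0 \<le> g' i0 j" using g'(1) i0 by blast
      have "\<forall>j\<in>J-{j0}. g' i0 j = 0"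
      proof
        fix j assume jj: "j\<in>J-{j0}"
        show "g' i0 j = 0" by (rule sum_nn_zero[OF _ nn0 s0 jj]) (use finJ in simp)
      qed
      then have rowi0: "\<forall>j\<in>J. g' i0 j = h i0 j" using hz g'00 by (metis DiffI singletonD)
      let ?I = "I - {i0}"
      have lt: "card ?I + card J < card I + card J" using card_Diff1_less[OF finI i0(1)] by simp
      have IH: "(\<Sum>i\<in>?I. \<Sum>j\<in>J. g' i j * u i j) \<le> (\<Sum>i\<in>?I. \<Sum>j\<in>J. h i j * u i j)
       \<and> ((\<Sum>i\<in>?I. \<Sum>j\<in>J. g' i j * u i j) = (\<Sum>i\<in>?I. \<Sum>j\<in>J. h i j * u i j) \<longrightarrow> (\<forall>i\<in>?I. \<forall>j\<in>J. g' i j = h i j))"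
      proof (rule less.hyps[OF lt])
        show "finite ?I" using finI by simp
        show "finite J" by fact
        show "\<forall>i\<in>?I. \<forall>j\<in>J. 0 \<le> g' i j" using g'(1) by auto
        show "\<forall>i\<in>?I. \<forall>j\<in>J. 0 \<le> h i j" using hnn by auto
        show "\<forall>i\<in>?I. (\<Sum>j\<in>J. g' i j) = (\<Sum>j\<in>J. h i j)" using g'r by auto
        show "\<forall>j\<in>J. (\<Sum>i\<in>?I. g' i j) = (\<Sum>i\<in>?I. h i j)"
        proof
          fix j assume "j\<in>J"
          have "(\<Sum>i\<in>I. g' i j) = g' i0 j + (\<Sum>i\<in>?I. g' i j)" using sum.remove[OF finI i0(1)] by blast
          moreover have "(\<Sum>i\<in>I. h i j) = h i0 j + (\<Sum>i\<in>?I. h i j)" using sum.remove[OF finI i0(1)] by blast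
          ultimately show "(\<Sum>i\<in>?I. g' i j) = (\<Sum>i\<in>?I. h i j)" using g'c rowi0 \<open>j\<in>J\<close> by auto
        qed
      qed
      have sp: "?V f = (\<Sum>j\<in>J. f i0 j * u i0 j) + (\<Sum>i\<in>?I. \<Sum>j\<in>J. f i j * u i j)" for f
        using sum.remove[OF finI i0(1)] by blast
      have r0: "(\<Sum>j\<in>J. g' i0 j * u i0 j) = (\<Sum>j\<in>J. h i0 j * u i0 j)" using rowi0 by simp
      have "\<forall>i\<in>I. \<forall>j\<in>J. g' i j = h i j" if "(\<forall>i\<in>?I. \<forall>j\<in>J. g' i j = h i j)"
        using that rowi0 by blast
      then show ?thesis using IH unfolding sp[of g'] sp[of h] r0 by linarith
    next
      assume hz: "\<forall>i\<in>I-{i0}. h i j0 = 0"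
      have g'c0: "(\<Sum>i\<in>I. g' i j0) = g' i0 j0 + (\<Sum>i\<in>I-{i0}. g' i j0)"
        using sum.remove[OF finI i0(1), of "\<lambda>i. g' i j0"] by simp
      have s0: "(\<Sum>i\<in>I-{i0}. g' i j0) = 0" using g'c0 g'c j0 hc hz g'00 by simp
      have nn0: "\<forall>i\<in>I-{i0}. 0 \<le> g' i j0" using g'(1) j0 by blast
      have "\<forall>i\<in>I-{i0}. g' i j0 = 0"
      proof
        fix i assume ii: "i\<in>I-{i0}"
        show "g' i j0 = 0" using sum_nn_zero[OF _ nn0 s0 ii] finI by simp
      qed
      then have colj0: "\<forall>i\<in>I. g' i j0 = h i j0" using hz g'00 by (metis DiffI singletonD)
      let ?J = "J - {j0}"
      have lt: "card I + card ?J < card I + card J" using card_Diff1_less[OF finJ j0(1)] by simp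
      have IH: "(\<Sum>i\<in>I. \<Sum>j\<in>?J. g' i j * u i j) \<le> (\<Sum>i\<in>I. \<Sum>j\<in>?J. h i j * u i j)
       \<and> ((\<Sum>i\<in>I. \<Sum>j\<in>?J. g' i j * u i j) = (\<Sum>i\<in>I. \<Sum>j\<in>?J. h i j * u i j) \<longrightarrow> (\<forall>i\<in>I. \<forall>j\<in>?J. g' i j = h i j))"
      proof (rule less.hyps[OF lt])
        show "finite I" by fact
        show "finite ?J" using finJ by simp
        show "\<forall>i\<in>I. \<forall>j\<in>?J. 0 \<le> g' i j" using g'(1) by auto
        show "\<forall>i\<in>I. \<forall>j\<in>?J. 0 \<le> h i j" using hnn by auto
        show "\<forall>j\<in>?J. (\<Sum>i\<in>I. g' i j) = (\<Sum>i\<in>I. h i j)" using g'c by auto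
        show "\<forall>i\<in>I. (\<Sum>j\<in>?J. g' i j) = (\<Sum>j\<in>?J. h i j)"
        proof
          fix i assume "i\<in>I"
          have "(\<Sum>j\<in>J. g' i j) = g' i j0 + (\<Sum>j\<in>?J. g' i j)" using sum.remove[OF finJ j0(1)] by blast
          moreover have "(\<Sum>j\<in>J. h i j) = h i j0 + (\<Sum>j\<in>?J. h i j)" using sum.remove[OF finJ j0(1)] by blast
          ultimately show "(\<Sum>j\<in>?J. g' i j) = (\<Sum>j\<in>?J. h i j)" using g'r colj0 \<open>i\<in>I\<close> by auto
        qed
      qed
      have sp: "?V f = (\<Sum>i\<in>I. f i j0 * u i j0) + (\<Sum>i\<in>I. \<Sum>j\<in>?J. f i j * u i j)" for f
      proof -
        have "?V f = (\<Sum>i\<in>I. f i j0 * u i j0 + (\<Sum>j\<in>?J. f i j * u i j))"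
          using sum.remove[OF finJ j0(1)] by (intro sum.cong) blast+
        then show ?thesis by (simp add: sum.distrib)
      qed
      have c0: "(\<Sum>i\<in>I. g' i j0 * u i j0) = (\<Sum>i\<in>I. h i j0 * u i j0)" using colj0 by simp
      have "\<forall>i\<in>I. \<forall>j\<in>J. g' i j = h i j" if "(\<forall>i\<in>I. \<forall>j\<in>?J. g' i j = h i j)"
        using that colj0 by blast
      then show ?thesis using IH unfolding sp[of g'] sp[of h] c0 by linarith
    qed
    show ?thesis
    proof
      show "?V g \<le> ?V h" using key g'(5) by linarith
      show "?V g = ?V h \<longrightarrow> (\<forall>i\<in>I. \<forall>j\<in>J. g i j = h i j)"
      proof
        assume e: "?V g = ?V h"
        then have "?V g = ?V g'" "?V g' = ?V h" using key g'(5) by linarith+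
        then show "\<forall>i\<in>I. \<forall>j\<in>J. g i j = h i j" using key g'(6) by simp
      qed
    qed
  qed
qed



lemma exists_max:
  fixes W :: "'y::finite \<Rightarrow> 'a::finite \<Rightarrow> real" and V :: "'z::finite \<Rightarrow> 'y \<Rightarrow> 'a \<Rightarrow> real" and P :: "'z \<Rightarrow> real"
  assumes s0: "is_strat s0" and s0P: "\<forall>z. (\<Sum>y\<in>UNIV. \<Sum>a\<in>UNIV. s0 y a * V z y a) = P z"
  shows "\<exists>s. is_strat s \<and> (\<forall>z. (\<Sum>y\<in>UNIV. \<Sum>a\<in>UNIV. s y a * V z y a) = P z) \<and>
     (\<forall>t. is_strat t \<and> (\<forall>z. (\<Sum>y\<in>UNIV. \<Sum>a\<in>UNIV. t y a * V z y a) = P z) \<longrightarrow>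
        (\<Sum>y\<in>UNIV. \<Sum>a\<in>UNIV. t y a * W y a) \<le> (\<Sum>y\<in>UNIV. \<Sum>a\<in>UNIV. s y a * W y a))"
proof -
  define S where "S = {v :: real^('y \<times> 'a). (\<forall>y a. 0 \<le> v$(y,a)) \<and> (\<forall>y. (\<Sum>a\<in>UNIV. v$(y,a)) = 1)
      \<and> (\<forall>z. (\<Sum>y\<in>UNIV. \<Sum>a\<in>UNIV. v$(y,a) * V z y a) = P z)}"
  define f where "f v = (\<Sum>y\<in>UNIV. \<Sum>a\<in>UNIV. v$(y,a) * W y a)" for v :: "real^('y \<times> 'a)"
  define fromF where "fromF t = (\<chi> p. t (fst p) (snd p))" for t :: "'y \<Rightarrow> 'a \<Rightarrow> real"
  have fromF_nth[simp]: "fromF t $ (y,a) = t y a" for t y a unfolding fromF_def by simp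
  have inS: "fromF t \<in> S" if "is_strat t" "\<forall>z. (\<Sum>y\<in>UNIV. \<Sum>a\<in>UNIV. t y a * V z y a) = P z" for t
    using that unfolding S_def is_strat_def is_dist_def by simp
  have clS: "closed S" unfolding S_def
    by (intro closed_Collect_conj closed_Collect_all closed_Collect_le closed_Collect_eq continuous_intros)
  have sub: "S \<subseteq> cbox 0 1"
  proof
    fix v assume "v \<in> S"
    then have nn: "\<forall>y a. 0 \<le> v$(y,a)" and rs: "\<forall>y. (\<Sum>a\<in>UNIV. v$(y,a)) = 1" unfolding S_def by auto
    have "v$(y,a) \<le> 1" for y a
    proof -
      have "v$(y,a) \<le> (\<Sum>a\<in>UNIV. v$(y,a))" by (rule member_le_sum) (use nn in auto)
      then show ?thesis using rs by simp
    qed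
    then show "v \<in> cbox 0 1" using nn unfolding mem_box_cart by (auto)
  qed
  have cS: "compact S"
  proof -
    have "compact (S \<inter> cbox 0 1)" using clS by (intro closed_Int_compact) auto
    moreover have "S \<inter> cbox 0 1 = S" using sub by auto
    ultimately show ?thesis by simp
  qed
  have neS: "S \<noteq> {}" using inS[OF s0 s0P] by auto
  have cf: "continuous_on S f" unfolding f_def by (intro continuous_intros)
  obtain x where x: "x \<in> S" "\<forall>v\<in>S. f v \<le> f x" using continuous_attains_sup[OF cS neS cf] by blast
  define s where "s y a = x$(y,a)" for y a
  show ?thesis
  proof (intro exI[of _ s] conjI allI impI)
    show "is_strat s" using x(1) unfolding S_def s_def is_strat_def is_dist_def by simp
    show "(\<Sum>y\<in>UNIV. \<Sum>a\<in>UNIV. s y a * V z y a) = P z" for z using x(1) unfolding S_def s_def by simp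
    fix t assume t: "is_strat t \<and> (\<forall>z. (\<Sum>y\<in>UNIV. \<Sum>a\<in>UNIV. t y a * V z y a) = P z)"
    have "f (fromF t) \<le> f x" using x(2) inS t by blast
    then show "(\<Sum>y\<in>UNIV. \<Sum>a\<in>UNIV. t y a * W y a) \<le> (\<Sum>y\<in>UNIV. \<Sum>a\<in>UNIV. s y a * W y a)"
      unfolding f_def s_def by simp
  qed
qed



lemma gam_eq: "gam rho0 \<alpha>0 s y a = rho_marg rho0 \<alpha>0 y * s y a"
  unfolding gam_def rho_marg_def by (simp add: sum_distrib_right)

lemma rm_pos:
  assumes "is_dist \<alpha>0" "\<And>a0 y0. rho0 a0 y0 > 0"
  shows "rho_marg rho0 \<alpha>0 y > 0"
proof -
  obtain a where a: "\<alpha>0 a > 0"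
  proof (rule ccontr)
    assume "\<not> thesis"
    then have "\<forall>a. \<alpha>0 a \<le> 0" using that by (meson not_less)
    then have "(\<Sum>a\<in>UNIV. \<alpha>0 a) \<le> 0" by (meson sum_nonpos)
    then show False using assms(1) unfolding is_dist_def by simp
  qed
  show ?thesis unfolding rho_marg_def
  proof (rule sum_pos2[where i=a])
    show "0 < \<alpha>0 a * rho0 a y" using a assms(2) by simp
    fix i
    have "0 \<le> \<alpha>0 i" "0 \<le> rho0 i y" using assms unfolding is_dist_def by (auto simp: less_imp_le)
    then show "0 \<le> \<alpha>0 i * rho0 i y" by simp
  qed auto
qed

lemma supermod_avg:
  assumes sm: "strictly_supermodular rY rA u" and d: "is_dist \<alpha>2"
    and "strict rY y y'" "strict rA a a'"
  shows "u_avg u \<alpha>2 y' a' + u_avg u \<alpha>2 y a > u_avg u \<alpha>2 y' a + u_avg u \<alpha>2 y a'"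
proof -
  obtain b where b: "\<alpha>2 b > 0"
  proof (rule ccontr)
    assume "\<not> thesis"
    then have "\<forall>a. \<alpha>2 a \<le> 0" using that by (meson not_less)
    then have "(\<Sum>a\<in>UNIV. \<alpha>2 a) \<le> 0" by (meson sum_nonpos)
    then show False using d unfolding is_dist_def by simp
  qed
  have pos: "u y a c - u y a' c - u y' a c + u y' a' c > 0" for c
  proof -
    have "u y' a c - u y' a' c < u y a c - u y a' c"
      using sm assms(3,4) unfolding strictly_supermodular_def by blast
    then show ?thesis by simp
  qed
  have "0 < (\<Sum>c\<in>UNIV. \<alpha>2 c * (u y a c - u y a' c - u y' a c + u y' a' c))"
    apply (rule sum_pos2[where i=b])
    using b pos d by (auto simp: is_dist_def less_imp_le)
  also have "\<dots> = u_avg u \<alpha>2 y' a' + u_avg u \<alpha>2 y a - u_avg u \<alpha>2 y' a - u_avg u \<alpha>2 y a'"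
    unfolding u_avg_def by (simp add: algebra_simps sum.distrib sum_subtractf)
  finally show ?thesis by simp
qed

lemma lin_form:
  fixes F :: "'y0::finite \<Rightarrow> 'a1::finite \<Rightarrow> 'a2::finite \<Rightarrow> real"
  shows "(\<Sum>a0\<in>UNIV. \<Sum>y0\<in>UNIV. \<Sum>a1\<in>UNIV. \<Sum>a2\<in>UNIV. \<alpha>0 a0 * rho0 a0 y0 * s y0 a1 * \<alpha>2 a2 * F y0 a1 a2)
     = (\<Sum>y0\<in>UNIV. \<Sum>a1\<in>UNIV. s y0 a1 * (rho_marg rho0 \<alpha>0 y0 * u_avg F \<alpha>2 y0 a1))"
proof -
  have "(\<Sum>a0\<in>UNIV. \<Sum>y0\<in>UNIV. \<Sum>a1\<in>UNIV. \<Sum>a2\<in>UNIV. \<alpha>0 a0 * rho0 a0 y0 * s y0 a1 * \<alpha>2 a2 * F y0 a1 a2)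
      = (\<Sum>a0\<in>UNIV. \<Sum>y0\<in>UNIV. \<Sum>a1\<in>UNIV. (\<alpha>0 a0 * rho0 a0 y0) * (s y0 a1 * u_avg F \<alpha>2 y0 a1))"
    unfolding u_avg_def by (simp add: sum_distrib_left mult.assoc mult.left_commute)
  also have "\<dots> = (\<Sum>y0\<in>UNIV. \<Sum>a0\<in>UNIV. \<Sum>a1\<in>UNIV. (\<alpha>0 a0 * rho0 a0 y0) * (s y0 a1 * u_avg F \<alpha>2 y0 a1))"
    by (rule sum.swap)
  also have "\<dots> = (\<Sum>y0\<in>UNIV. \<Sum>a1\<in>UNIV. \<Sum>a0\<in>UNIV. (\<alpha>0 a0 * rho0 a0 y0) * (s y0 a1 * u_avg F \<alpha>2 y0 a1))"
    by (intro sum.cong refl sum.swap)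
  also have "\<dots> = (\<Sum>y0\<in>UNIV. \<Sum>a1\<in>UNIV. s y0 a1 * (rho_marg rho0 \<alpha>0 y0 * u_avg F \<alpha>2 y0 a1))"
    unfolding rho_marg_def by (simp add: sum_distrib_left sum_distrib_right mult_ac)
  finally show ?thesis .
qed

lemma pdist_form: "pdist rho0 rho1 \<alpha>0 s \<alpha>2 z = (\<Sum>y0\<in>UNIV. \<Sum>a1\<in>UNIV. s y0 a1 * (rho_marg rho0 \<alpha>0 y0 * u_avg (\<lambda>y0 a1 a2. rho1 a1 a2 z) \<alpha>2 y0 a1))"
  unfolding pdist_def by (rule lin_form)

lemma ui_form: "ui_ext rho0 u \<alpha>0 s \<alpha>2 = (\<Sum>y0\<in>UNIV. \<Sum>a1\<in>UNIV. s y0 a1 * (rho_marg rho0 \<alpha>0 y0 * u_avg u \<alpha>2 y0 a1))"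
  unfolding ui_ext_def by (rule lin_form)

lemma ind_row: fixes y p :: "'y::finite" and a q :: "'a::finite" shows "(\<Sum>a\<in>UNIV. (if y = p \<and> a = q then c else 0)) = (if y = p then c else (0::real))"
  by (cases "y = p") auto

lemma ind_col: fixes y p :: "'y::finite" and a q :: "'a::finite" shows "(\<Sum>y\<in>UNIV. (if y = p \<and> a = q then c else 0)) = (if a = q then c else (0::real))"
  by (cases "a = q") auto

lemma ind_row': fixes c :: "'b::finite" shows "(\<Sum>b\<in>UNIV. (if P \<and> c = b then x else 0)) = (if P then x else (0::real))"
  by (cases P) auto

lemma ind_col': fixes c :: "'b::finite" shows "(\<Sum>b\<in>UNIV. (if c = b \<and> P then x else 0)) = (if P then x else (0::real))"
  by (cases P) auto

lemma ind_val: fixes p :: "'y::finite" and q :: "'a::finite" shows "(\<Sum>y\<in>UNIV. \<Sum>a\<in>UNIV. (if y = p \<and> a = q then c else 0) * U y a) = (c * U p q :: real)"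
proof -
  have e: "(if y = p \<and> a = q then c else 0) * U y a = (if y = p \<and> a = q then c * U p q else 0)" for y a by auto
  show ?thesis by (simp only: e ind_row) simp
qed

lemma rot_sum:
  assumes "N \<ge> 1"
  shows "(\<Sum>i<N. f (Suc i mod N)) = (\<Sum>i<N. (f i :: real))"
proof -
  obtain M where N: "N = Suc M" using assms by (cases N) auto
  have "(\<Sum>i<Suc M. f (Suc i mod Suc M)) = (\<Sum>i<M. f (Suc i mod Suc M)) + f 0" by simp
  also have "(\<Sum>i<M. f (Suc i mod Suc M)) = (\<Sum>i<M. f (Suc i))" by (intro sum.cong) auto
  also have "\<dots> + f 0 = (\<Sum>i<Suc M. f i)" by (subst sum.lessThan_Suc_shift) simp
  finally show ?thesis using N by simp
qed

lemma count_row: fixes q :: "nat \<Rightarrow> 'b::finite" shows "(\<Sum>b\<in>UNIV. \<Sum>i<N. (if p i = a \<and> q i = b then 1 else 0)) = (\<Sum>i<N. (if p i = a then 1 else (0::real)))"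
  by (subst sum.swap) (simp only: ind_row')

lemma count_col: fixes p :: "nat \<Rightarrow> 'a::finite" shows "(\<Sum>a\<in>UNIV. \<Sum>i<N. (if p i = a \<and> q i = b then 1 else 0)) = (\<Sum>i<N. (if q i = b then 1 else (0::real)))"
  by (subst sum.swap) (simp only: ind_col')

lemma count_val: fixes p :: "nat \<Rightarrow> 'a::finite" and q :: "nat \<Rightarrow> 'b::finite" shows "(\<Sum>a\<in>UNIV. \<Sum>b\<in>UNIV. (\<Sum>i<N. (if p i = a \<and> q i = b then 1 else 0)) * U a b) = (\<Sum>i<N. (U (p i) (q i) :: real))"
proof -
  have "(\<Sum>a\<in>UNIV. \<Sum>b\<in>UNIV. (\<Sum>i<N. (if p i = a \<and> q i = b then 1 else 0)) * U a b)
     = (\<Sum>a\<in>UNIV. \<Sum>b\<in>UNIV. \<Sum>i<N. (if p i = a \<and> q i = b then 1 else 0) * U a b)"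
    by (simp add: sum_distrib_right)
  also have "\<dots> = (\<Sum>a\<in>UNIV. \<Sum>i<N. \<Sum>b\<in>UNIV. (if p i = a \<and> q i = b then 1 else 0) * U a b)"
    by (intro sum.cong refl sum.swap)
  also have "\<dots> = (\<Sum>i<N. \<Sum>a\<in>UNIV. \<Sum>b\<in>UNIV. (if a = p i \<and> b = q i then 1 else 0) * U a b)"
    by (subst sum.swap) (intro sum.cong refl, auto)
  also have "\<dots> = (\<Sum>i<N. U (p i) (q i))" by (simp only: ind_val) simp
  finally show ?thesis .
qed



definition swapd :: "'y \<Rightarrow> 'y \<Rightarrow> 'a \<Rightarrow> 'a \<Rightarrow> 'y \<Rightarrow> 'a \<Rightarrow> real" where
  "swapd y0 y0' a1 a1' y a = (if y = y0 \<and> a = a1' then 1 else 0) + (if y = y0' \<and> a = a1 then 1 else 0)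
     - (if y = y0 \<and> a = a1 then 1 else 0) - (if y = y0' \<and> a = a1' then 1 else 0)"

lemma swapd_row: fixes y :: "'y::finite" and a1 :: "'a::finite"
  shows "(\<Sum>a\<in>UNIV. swapd y0 y0' a1 a1' y a) = 0"
  unfolding swapd_def by (simp add: sum.distrib sum_subtractf ind_row)

lemma swapd_col: fixes a :: "'a::finite" and y0 :: "'y::finite"
  shows "(\<Sum>y\<in>UNIV. swapd y0 y0' a1 a1' y a) = 0"
  unfolding swapd_def by (simp add: sum.distrib sum_subtractf ind_col)

lemma swapd_val: fixes y0 :: "'y::finite" and a1 :: "'a::finite"
  shows "(\<Sum>y\<in>UNIV. \<Sum>a\<in>UNIV. swapd y0 y0' a1 a1' y a * U y a) = U y0 a1' + U y0' a1 - U y0 a1 - U y0' a1'"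
proof -
  have e: "swapd y0 y0' a1 a1' y a * U y a = (if y = y0 \<and> a = a1' then 1 else 0) * U y a + (if y = y0' \<and> a = a1 then 1 else 0) * U y a
     - (if y = y0 \<and> a = a1 then 1 else 0) * U y a - (if y = y0' \<and> a = a1' then 1 else 0) * U y a" for y a
    unfolding swapd_def by (simp add: algebra_simps)
  show ?thesis by (simp only: e sum.distrib sum_subtractf ind_val)
qed

lemma swapd_cases:
  assumes "y0 \<noteq> y0'" "a1 \<noteq> a1'"
  shows "0 \<le> swapd y0 y0' a1 a1' y a \<or> (y = y0 \<and> a = a1 \<and> swapd y0 y0' a1 a1' y a = -1) \<or> (y = y0' \<and> a = a1' \<and> swapd y0 y0' a1 a1' y a = -1)"
  using assms unfolding swapd_def by auto

lemma argmax_ex: fixes f :: "'a::finite \<Rightarrow> real" shows "\<exists>a. \<forall>b. f b \<le> f a"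
proof -
  have "Max (range f) \<in> range f" by (rule Max_in) auto
  then obtain a where "Max (range f) = f a" by (metis imageE)
  moreover have "f b \<le> Max (range f)" for b by (rule Max_ge) auto
  ultimately show ?thesis by metis
qed

lemma is_dist_pt: "is_dist (pt (a::'a::finite))"
  unfolding is_dist_def pt_def by auto

lemma supn_zero: "supn (\<lambda>x::'a::finite. 0) = 0"
  unfolding supn_def by simp

lemma supn_ge: "\<bar>f x\<bar> \<le> supn (f :: 'a::finite \<Rightarrow> real)"
  unfolding supn_def by (rule Max_ge) auto

lemma gam_coupling:
  assumes d0: "is_dist \<alpha>0" and r0: "\<And>a0. is_dist (rho0 a0)" and s: "is_strat s"
  shows "gam rho0 \<alpha>0 s \<in> couplings (rho_marg rho0 \<alpha>0) (phi rho0 \<alpha>0 s)"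
proof -
  have rmnn: "0 \<le> rho_marg rho0 \<alpha>0 y" for y
    unfolding rho_marg_def using d0 r0 by (intro sum_nonneg) (simp add: is_dist_def)
  have rows: "(\<Sum>a\<in>UNIV. gam rho0 \<alpha>0 s y a) = rho_marg rho0 \<alpha>0 y" for y
    using s unfolding gam_eq is_strat_def is_dist_def by (simp add: sum_distrib_left[symmetric])
  have tot: "(\<Sum>y\<in>UNIV. rho_marg rho0 \<alpha>0 y) = 1"
  proof -
    have "(\<Sum>y\<in>UNIV. rho_marg rho0 \<alpha>0 y) = (\<Sum>a0\<in>UNIV. \<Sum>y\<in>UNIV. \<alpha>0 a0 * rho0 a0 y)"
      unfolding rho_marg_def by (rule sum.swap)
    also have "\<dots> = (\<Sum>a0\<in>UNIV. \<alpha>0 a0)" using r0 unfolding is_dist_def by (simp add: sum_distrib_left[symmetric])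
    finally show ?thesis using d0 unfolding is_dist_def by simp
  qed
  show ?thesis unfolding couplings_def
  proof (intro CollectI conjI allI)
    show "0 \<le> gam rho0 \<alpha>0 s y a" for y a using rmnn s unfolding gam_eq is_strat_def is_dist_def by simp
    show "(\<Sum>y\<in>UNIV. \<Sum>a\<in>UNIV. gam rho0 \<alpha>0 s y a) = 1" using rows tot by simp
    show "(\<Sum>a\<in>UNIV. gam rho0 \<alpha>0 s y a) = rho_marg rho0 \<alpha>0 y" for y by (rule rows)
    show "(\<Sum>y\<in>UNIV. gam rho0 \<alpha>0 s y a) = phi rho0 \<alpha>0 s a" for a unfolding phi_def ..
  qed
qed



lemma mono_cyc:
  fixes u1 :: "'y0::finite \<Rightarrow> 'a1::finite \<Rightarrow> 'a2::finite \<Rightarrow> real" and s :: "'y0 \<Rightarrow> 'a1 \<Rightarrow> real"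
  assumes rY: "linear_order rY" and rA: "linear_order rA" and sm: "strictly_supermodular rY rA u1"
  shows "monotone_strat rY rA s \<longleftrightarrow> u_cyc_monotone_strat u1 s"
proof
  assume mono: "monotone_strat rY rA s"
  show "u_cyc_monotone_strat u1 s" unfolding u_cyc_monotone_strat_def cyc_monotone_def
  proof (intro allI impI)
    fix \<alpha>2 :: "'a2 \<Rightarrow> real" and N :: nat and x :: "nat \<Rightarrow> 'y0" and y :: "nat \<Rightarrow> 'a1"
    assume d: "is_dist \<alpha>2" and H: "1 \<le> N \<and> (\<forall>i<N. (x i, y i) \<in> supp_graph s)"
    define h where "h a b = (\<Sum>i<N. if x i = a \<and> y i = b then 1 else 0 :: real)" for a b
    define g where "g a b = (\<Sum>i<N. if x i = a \<and> y (Suc i mod N) = b then 1 else 0 :: real)" for a b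
    let ?u = "u_avg u1 \<alpha>2"
    have hpos: "0 < s a b" if "0 < h a b" for a b
    proof (rule ccontr)
      assume "\<not> 0 < s a b"
      then have "\<forall>i<N. \<not> (x i = a \<and> y i = b)" using H unfolding supp_graph_def by auto
      then have "h a b = 0" unfolding h_def by (intro sum.neutral) auto
      then show False using that by simp
    qed
    have ot: "(\<Sum>i\<in>UNIV. \<Sum>j\<in>UNIV. g i j * ?u i j) \<le> (\<Sum>i\<in>UNIV. \<Sum>j\<in>UNIV. h i j * ?u i j)
       \<and> ((\<Sum>i\<in>UNIV. \<Sum>j\<in>UNIV. g i j * ?u i j) = (\<Sum>i\<in>UNIV. \<Sum>j\<in>UNIV. h i j * ?u i j) \<longrightarrow> (\<forall>i\<in>UNIV. \<forall>j\<in>UNIV. g i j = h i j))"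
    proof (rule ot_main[OF rY rA])
      show "?u i j + ?u i' j' > ?u i j' + ?u i' j" if "strict rY i' i" "strict rA j' j" for i i' j j'
        using supermod_avg[OF sm d that] by simp
      show "(j', j) \<in> rA" if "strict rY i' i" "0 < h i j" "0 < h i' j'" for i i' j j'
        using mono hpos that unfolding monotone_strat_def by blast
      show "\<forall>i\<in>UNIV. \<forall>j\<in>UNIV. 0 \<le> g i j" unfolding g_def by (auto intro: sum_nonneg)
      show "\<forall>i\<in>UNIV. \<forall>j\<in>UNIV. 0 \<le> h i j" unfolding h_def by (auto intro: sum_nonneg)
      show "\<forall>i\<in>UNIV. (\<Sum>j\<in>UNIV. g i j) = (\<Sum>j\<in>UNIV. h i j)"
        unfolding g_def h_def by (simp only: count_row) simp
      show "\<forall>j\<in>UNIV. (\<Sum>i\<in>UNIV. g i j) = (\<Sum>i\<in>UNIV. h i j)"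
      proof
        fix b :: 'a1
        have "(\<Sum>i\<in>UNIV. g i b) = (\<Sum>i<N. if y (Suc i mod N) = b then 1 else 0)"
          unfolding g_def by (rule count_col)
        also have "\<dots> = (\<Sum>i<N. if y i = b then 1 else 0)"
          using rot_sum[of N "\<lambda>i. if y i = b then 1 else 0"] H by simp
        also have "\<dots> = (\<Sum>i\<in>UNIV. h i b)" unfolding h_def by (rule count_col[symmetric])
        finally show "(\<Sum>i\<in>UNIV. g i b) = (\<Sum>i\<in>UNIV. h i b)" .
      qed
    qed auto
    have "(\<Sum>i\<in>UNIV. \<Sum>j\<in>UNIV. g i j * ?u i j) = (\<Sum>i<N. ?u (x i) (y (Suc i mod N)))"
      unfolding g_def by (rule count_val)
    moreover have "(\<Sum>i\<in>UNIV. \<Sum>j\<in>UNIV. h i j * ?u i j) = (\<Sum>i<N. ?u (x i) (y i))"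
      unfolding h_def by (rule count_val)
    ultimately show "(\<Sum>i<N. ?u (x i) (y (Suc i mod N))) \<le> (\<Sum>i<N. ?u (x i) (y i))" using ot by simp
  qed
next
  assume cyc: "u_cyc_monotone_strat u1 s"
  show "monotone_strat rY rA s" unfolding monotone_strat_def
  proof (intro allI impI)
    fix y0 y0' a1 a1' assume H: "strict rY y0 y0' \<and> 0 < s y0 a1 \<and> 0 < s y0' a1'"
    show "(a1, a1') \<in> rA"
    proof (rule ccontr)
      assume na: "(a1, a1') \<notin> rA"
      then have "a1 \<noteq> a1'" using lin_facts(1)[OF rA] by auto
      moreover have "(a1', a1) \<in> rA" using na lin_facts(4)[OF rA, of a1 a1'] by auto
      ultimately have sA: "strict rA a1' a1" unfolding strict_def by auto
      define \<alpha>2 where "\<alpha>2 = pt (undefined :: 'a2)"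
      have d: "is_dist \<alpha>2" unfolding \<alpha>2_def by (rule is_dist_pt)
      define x where "x i = (if i = 0 then y0 else y0')" for i :: nat
      define y where "y i = (if i = 0 then a1 else a1')" for i :: nat
      have cm: "cyc_monotone (u_avg u1 \<alpha>2) (supp_graph s)" using cyc d by (simp add: u_cyc_monotone_strat_def)
      have inS: "\<forall>i<2. (x i, y i) \<in> supp_graph s" using H by (auto simp: x_def y_def supp_graph_def less_2_cases_iff)
      have "(\<Sum>i<2. u_avg u1 \<alpha>2 (x i) (y (Suc i mod 2))) \<le> (\<Sum>i<2. u_avg u1 \<alpha>2 (x i) (y i))"
        using cm[unfolded cyc_monotone_def, rule_format, of 2 x y] inS by simp
      then have "u_avg u1 \<alpha>2 y0 a1' + u_avg u1 \<alpha>2 y0' a1 \<le> u_avg u1 \<alpha>2 y0 a1 + u_avg u1 \<alpha>2 y0' a1'"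
        unfolding x_def y_def by (simp add: numeral_2_eq_2)
      moreover have "u_avg u1 \<alpha>2 y0' a1 + u_avg u1 \<alpha>2 y0 a1' > u_avg u1 \<alpha>2 y0' a1' + u_avg u1 \<alpha>2 y0 a1"
        using supermod_avg[OF sm d _ sA] H by blast
      ultimately show False by simp
    qed
  qed
qed



lemma mono_CD2:
  fixes rho0 :: "'a0::finite \<Rightarrow> 'y0::finite \<Rightarrow> real"
    and rho1 :: "'a1::finite \<Rightarrow> 'a2::finite \<Rightarrow> 'y1::finite \<Rightarrow> real"
    and u0 :: "'a0 \<Rightarrow> 'a1 \<Rightarrow> real"
    and u1 u2 :: "'y0 \<Rightarrow> 'a1 \<Rightarrow> 'a2 \<Rightarrow> real"
    and s :: "'y0 \<Rightarrow> 'a1 \<Rightarrow> real"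
  assumes rY: "linear_order rY" and rA: "linear_order rA" and sm: "strictly_supermodular rY rA u1"
    and r0: "\<And>a0. is_dist (rho0 a0)" and fs: "\<And>a0 y0. rho0 a0 y0 > 0"
    and st: "is_strat s" and mono: "monotone_strat rY rA s"
  shows "CD2 rho0 rho1 u0 u1 u2 s"
  unfolding CD2_def Let_def
proof (intro allI impI)
  fix \<alpha>0 \<alpha>2 assume "(\<alpha>0, \<alpha>2) \<in> B_eta rho0 rho1 u0 u2 0 s"
  then have d0: "is_dist \<alpha>0" and d2: "is_dist \<alpha>2" unfolding B_eta_def BR_def by auto
  let ?gs = "gam rho0 \<alpha>0 s"
  let ?C = "couplings (rho_marg rho0 \<alpha>0) (phi rho0 \<alpha>0 s)"
  let ?u = "u_avg u1 \<alpha>2"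
  have gsC: "?gs \<in> ?C" by (rule gam_coupling[OF d0 r0 st])
  have rmpos: "rho_marg rho0 \<alpha>0 y > 0" for y by (rule rm_pos[OF d0 fs])
  have best: "(\<Sum>y0\<in>UNIV. \<Sum>a1\<in>UNIV. g y0 a1 * ?u y0 a1) < (\<Sum>y0\<in>UNIV. \<Sum>a1\<in>UNIV. ?gs y0 a1 * ?u y0 a1)"
    if gC: "g \<in> ?C" and ne: "g \<noteq> ?gs" for g
  proof -
    have ot: "(\<Sum>i\<in>UNIV. \<Sum>j\<in>UNIV. g i j * ?u i j) \<le> (\<Sum>i\<in>UNIV. \<Sum>j\<in>UNIV. ?gs i j * ?u i j)
       \<and> ((\<Sum>i\<in>UNIV. \<Sum>j\<in>UNIV. g i j * ?u i j) = (\<Sum>i\<in>UNIV. \<Sum>j\<in>UNIV. ?gs i j * ?u i j) \<longrightarrow> (\<forall>i\<in>UNIV. \<forall>j\<in>UNIV. g i j = ?gs i j))"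
    proof (rule ot_main[OF rY rA])
      show "?u i j + ?u i' j' > ?u i j' + ?u i' j" if "strict rY i' i" "strict rA j' j" for i i' j j'
        using supermod_avg[OF sm d2 that] by simp
      show "(j', j) \<in> rA" if "strict rY i' i" "0 < ?gs i j" "0 < ?gs i' j'" for i i' j j'
      proof -
        have "0 < s i j" "0 < s i' j'" using that(2,3) rmpos[of i] rmpos[of i'] unfolding gam_eq by (auto simp: zero_less_mult_iff)
        then show ?thesis using mono that(1) unfolding monotone_strat_def by blast
      qed
      show "\<forall>i\<in>UNIV. \<forall>j\<in>UNIV. 0 \<le> g i j" using gC unfolding couplings_def by auto
      show "\<forall>i\<in>UNIV. \<forall>j\<in>UNIV. 0 \<le> ?gs i j" using gsC unfolding couplings_def by auto
      show "\<forall>i\<in>UNIV. (\<Sum>j\<in>UNIV. g i j) = (\<Sum>j\<in>UNIV. ?gs i j)" using gC gsC unfolding couplings_def by auto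
      show "\<forall>j\<in>UNIV. (\<Sum>i\<in>UNIV. g i j) = (\<Sum>i\<in>UNIV. ?gs i j)" using gC gsC unfolding couplings_def by auto
    qed auto
    have "(\<Sum>i\<in>UNIV. \<Sum>j\<in>UNIV. g i j * ?u i j) \<noteq> (\<Sum>i\<in>UNIV. \<Sum>j\<in>UNIV. ?gs i j * ?u i j)"
    proof
      assume "(\<Sum>i\<in>UNIV. \<Sum>j\<in>UNIV. g i j * ?u i j) = (\<Sum>i\<in>UNIV. \<Sum>j\<in>UNIV. ?gs i j * ?u i j)"
      then have "\<forall>i j. g i j = ?gs i j" using ot by auto
      then have "g = ?gs" by (intro ext) auto
      then show False using ne by simp
    qed
    then show ?thesis using ot by linarith
  qed
  show "?gs \<in> ?C \<and> (\<forall>g\<in>?C. g \<noteq> ?gs \<longrightarrow> (\<Sum>y0\<in>UNIV. \<Sum>a1\<in>UNIV. g y0 a1 * ?u y0 a1) < (\<Sum>y0\<in>UNIV. \<Sum>a1\<in>UNIV. ?gs y0 a1 * ?u y0 a1))"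
    using gsC best by blast
qed



lemma not_mono:
  fixes rho0 :: "'a0::finite \<Rightarrow> 'y0::finite \<Rightarrow> real"
    and rho1 :: "'a1::finite \<Rightarrow> 'a2::finite \<Rightarrow> 'y1::finite \<Rightarrow> real"
    and u0 :: "'a0 \<Rightarrow> 'a1 \<Rightarrow> real"
    and u1 u2 :: "'y0 \<Rightarrow> 'a1 \<Rightarrow> 'a2 \<Rightarrow> real"
    and s :: "'y0 \<Rightarrow> 'a1 \<Rightarrow> real"
  assumes rY: "linear_order rY" and rA: "linear_order rA" and sm: "strictly_supermodular rY rA u1"
    and r0: "\<And>a0. is_dist (rho0 a0)" and fs: "\<And>a0 y0. rho0 a0 y0 > 0"
    and st: "is_strat s" and nm: "\<not> monotone_strat rY rA s"
  shows "\<not> CD1 rho0 rho1 u0 u1 u2 s \<and> \<not> CD2 rho0 rho1 u0 u1 u2 s"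
proof -
  obtain y0 y0' a1 a1' where v: "strict rY y0 y0'" "0 < s y0 a1" "0 < s y0' a1'" "(a1,a1') \<notin> rA"
    using nm unfolding monotone_strat_def by blast
  have ya: "y0 \<noteq> y0'" using v(1) unfolding strict_def by simp
  have aa: "a1 \<noteq> a1'" using v(4) lin_facts(1)[OF rA] by auto
  have "(a1', a1) \<in> rA" using v(4) lin_facts(4)[OF rA, of a1 a1'] by auto
  then have sA: "strict rA a1' a1" using aa unfolding strict_def by auto
  obtain a0m where a0m: "\<forall>b. u0_ext rho0 u0 b s \<le> u0_ext rho0 u0 a0m s" using argmax_ex[of "\<lambda>b. u0_ext rho0 u0 b s"] by blast
  define \<alpha>0 where "\<alpha>0 = pt a0m"
  obtain a2m where a2m: "\<forall>b. ui_ext rho0 u2 \<alpha>0 s (pt b) \<le> ui_ext rho0 u2 \<alpha>0 s (pt a2m)" using argmax_ex[of "\<lambda>b. ui_ext rho0 u2 \<alpha>0 s (pt b)"] by blast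
  define \<alpha>2 where "\<alpha>2 = pt a2m"
  have d0: "is_dist \<alpha>0" unfolding \<alpha>0_def by (rule is_dist_pt)
  have d2: "is_dist \<alpha>2" unfolding \<alpha>2_def by (rule is_dist_pt)
  have BRm: "(\<alpha>0, \<alpha>2) \<in> BR rho0 u0 u2 s"
    unfolding BR_def using d0 d2 a0m a2m by (auto simp: \<alpha>0_def \<alpha>2_def pt_def split: if_splits)
  have Beta: "(\<alpha>0, \<alpha>2) \<in> B_eta rho0 rho1 u0 u2 \<eta> s" if "0 \<le> \<eta>" for \<eta>
    unfolding B_eta_def using BRm st that by (auto intro!: exI[of _ s] simp: supn_zero)
  let ?rm = "rho_marg rho0 \<alpha>0"
  have rmpos: "?rm y > 0" for y by (rule rm_pos[OF d0 fs])
  let ?u = "u_avg u1 \<alpha>2"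
  have gain: "?u y0 a1' + ?u y0' a1 - ?u y0 a1 - ?u y0' a1' > 0"
    using supermod_avg[OF sm d2 v(1) sA] by simp
  let ?d = "swapd y0 y0' a1 a1'"
  have dm1: "?d y0 a1 = -1" "?d y0' a1' = -1" using ya aa unfolding swapd_def by auto
  define e where "e = min (?rm y0 * s y0 a1) (?rm y0' * s y0' a1')"
  have epos: "e > 0" unfolding e_def using rmpos v(2,3) by simp
  have e1: "e \<le> ?rm y0 * s y0 a1" "e \<le> ?rm y0' * s y0' a1'" unfolding e_def by auto
  have snn: "0 \<le> s y a" for y a using st unfolding is_strat_def is_dist_def by simp
  have nCD2: "\<not> CD2 rho0 rho1 u0 u1 u2 s"
  proof
    assume cd: "CD2 rho0 rho1 u0 u1 u2 s"
    let ?gs = "gam rho0 \<alpha>0 s"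
    let ?C = "couplings (rho_marg rho0 \<alpha>0) (phi rho0 \<alpha>0 s)"
    define g where "g y a = ?gs y a + e * ?d y a" for y a
    have gsC: "?gs \<in> ?C" by (rule gam_coupling[OF d0 r0 st])
    have gC: "g \<in> ?C" unfolding couplings_def
    proof (intro CollectI conjI allI)
      show "0 \<le> g y a" for y a
      proof -
        have gsnn: "0 \<le> ?gs y a" using gsC unfolding couplings_def by auto
        from swapd_cases[OF ya aa, of y a] show ?thesis
        proof (elim disjE)
          assume "0 \<le> ?d y a" then show ?thesis unfolding g_def using gsnn epos by simp
        next
          assume "y = y0 \<and> a = a1 \<and> ?d y a = -1" then show ?thesis unfolding g_def gam_eq using e1 dm1 by auto
        next
          assume "y = y0' \<and> a = a1' \<and> ?d y a = -1" then show ?thesis unfolding g_def gam_eq using e1 dm1 by auto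
        qed
      qed
      have rows: "(\<Sum>a\<in>UNIV. g y a) = (\<Sum>a\<in>UNIV. ?gs y a)" for y
        unfolding g_def by (simp add: sum.distrib sum_distrib_left[symmetric] swapd_row)
      show "(\<Sum>a\<in>UNIV. g y a) = rho_marg rho0 \<alpha>0 y" for y using rows gsC unfolding couplings_def by auto
      show "(\<Sum>y\<in>UNIV. \<Sum>a\<in>UNIV. g y a) = 1" using rows gsC unfolding couplings_def by auto
      show "(\<Sum>y\<in>UNIV. g y a) = phi rho0 \<alpha>0 s a" for a
      proof -
        have "(\<Sum>y\<in>UNIV. g y a) = (\<Sum>y\<in>UNIV. ?gs y a)"
          unfolding g_def by (simp add: sum.distrib sum_distrib_left[symmetric] swapd_col)
        then show ?thesis using gsC unfolding couplings_def by auto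
      qed
    qed
    have gne: "g \<noteq> ?gs"
    proof
      assume "g = ?gs"
      then have "g y0 a1 = ?gs y0 a1" by simp
      then show False unfolding g_def using dm1 epos by simp
    qed
    have val: "(\<Sum>y\<in>UNIV. \<Sum>a\<in>UNIV. g y a * ?u y a) = (\<Sum>y\<in>UNIV. \<Sum>a\<in>UNIV. ?gs y a * ?u y a)
        + e * (?u y0 a1' + ?u y0' a1 - ?u y0 a1 - ?u y0' a1')"
    proof -
      have "(\<Sum>y\<in>UNIV. \<Sum>a\<in>UNIV. g y a * ?u y a) = (\<Sum>y\<in>UNIV. \<Sum>a\<in>UNIV. ?gs y a * ?u y a + e * (?d y a * ?u y a))"
        unfolding g_def by (simp add: algebra_simps)
      also have "\<dots> = (\<Sum>y\<in>UNIV. \<Sum>a\<in>UNIV. ?gs y a * ?u y a) + e * (\<Sum>y\<in>UNIV. \<Sum>a\<in>UNIV. ?d y a * ?u y a)"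
        by (simp add: sum.distrib sum_distrib_left)
      finally show ?thesis by (simp only: swapd_val)
    qed
    have "(\<Sum>y\<in>UNIV. \<Sum>a\<in>UNIV. g y a * ?u y a) < (\<Sum>y\<in>UNIV. \<Sum>a\<in>UNIV. ?gs y a * ?u y a)"
      using cd Beta[of 0] gC gne unfolding CD2_def Let_def by auto
    moreover have "0 < e * (?u y0 a1' + ?u y0' a1 - ?u y0 a1 - ?u y0' a1')" by (rule mult_pos_pos[OF epos gain])
    ultimately show False using val by linarith
  qed
  define st' where "st' y a = s y a + e / ?rm y * ?d y a" for y a
  have st'_strat: "is_strat st'" unfolding is_strat_def is_dist_def
  proof (intro allI conjI)
    fix y a
    show "0 \<le> st' y a"
    proof -
      from swapd_cases[OF ya aa, of y a] show ?thesis
      proof (elim disjE)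
        assume "0 \<le> ?d y a" then show ?thesis unfolding st'_def using snn[of y a] epos rmpos[of y] by simp
      next
        assume h: "y = y0 \<and> a = a1 \<and> ?d y a = -1"
        have "e / ?rm y0 \<le> s y0 a1" using e1 rmpos[of y0] by (simp add: divide_le_eq mult.commute)
        then show ?thesis using h dm1 unfolding st'_def by auto
      next
        assume h: "y = y0' \<and> a = a1' \<and> ?d y a = -1"
        have "e / ?rm y0' \<le> s y0' a1'" using e1 rmpos[of y0'] by (simp add: divide_le_eq mult.commute)
        then show ?thesis using h dm1 unfolding st'_def by auto
      qed
    qed
  next
    fix y
    have r1: "(\<Sum>a\<in>UNIV. st' y a) = (\<Sum>a\<in>UNIV. s y a) + e / ?rm y * (\<Sum>a\<in>UNIV. ?d y a)"
      unfolding st'_def by (simp only: sum.distrib sum_distrib_left)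
    show "(\<Sum>a\<in>UNIV. st' y a) = 1" unfolding r1 swapd_row
      using st unfolding is_strat_def is_dist_def by simp
  qed
  have lin: "(\<Sum>y\<in>UNIV. \<Sum>a\<in>UNIV. st' y a * (?rm y * K y a)) = (\<Sum>y\<in>UNIV. \<Sum>a\<in>UNIV. s y a * (?rm y * K y a))
       + e * (K y0 a1' + K y0' a1 - K y0 a1 - K y0' a1')" for K
  proof -
    have pw: "st' y a * (?rm y * K y a) = s y a * (?rm y * K y a) + e * (?d y a * K y a)" for y a
      unfolding st'_def using rmpos[of y] by (simp add: field_simps)
    have "(\<Sum>y\<in>UNIV. \<Sum>a\<in>UNIV. st' y a * (?rm y * K y a)) = (\<Sum>y\<in>UNIV. \<Sum>a\<in>UNIV. s y a * (?rm y * K y a)) + e * (\<Sum>y\<in>UNIV. \<Sum>a\<in>UNIV. ?d y a * K y a)"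
      by (simp only: pw sum.distrib sum_distrib_left)
    then show ?thesis by (simp only: swapd_val)
  qed
  have Kconst: "u_avg (\<lambda>y0 a1 a2. rho1 a1 a2 z) \<alpha>2 y a = u_avg (\<lambda>y0 a1 a2. rho1 a1 a2 z) \<alpha>2 y' a" for z y y' a
    unfolding u_avg_def by simp
  have pst': "pdist rho0 rho1 \<alpha>0 st' \<alpha>2 z = pdist rho0 rho1 \<alpha>0 s \<alpha>2 z" for z
    unfolding pdist_form lin using Kconst[of z y0' _ y0] by simp
  have ust': "ui_ext rho0 u1 \<alpha>0 st' \<alpha>2 > ui_ext rho0 u1 \<alpha>0 s \<alpha>2"
  proof -
    have "0 < e * (?u y0 a1' + ?u y0' a1 - ?u y0 a1 - ?u y0' a1')" by (rule mult_pos_pos[OF epos gain])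
    then show ?thesis unfolding ui_form lin by linarith
  qed
  let ?V = "\<lambda>z y a. ?rm y * u_avg (\<lambda>y0 a1 a2. rho1 a1 a2 z) \<alpha>2 y a"
  let ?W = "\<lambda>y a. ?rm y * ?u y a"
  obtain sx where sx: "is_strat sx" "\<forall>z. (\<Sum>y\<in>UNIV. \<Sum>a\<in>UNIV. sx y a * ?V z y a) = pdist rho0 rho1 \<alpha>0 s \<alpha>2 z"
     "\<forall>t. is_strat t \<and> (\<forall>z. (\<Sum>y\<in>UNIV. \<Sum>a\<in>UNIV. t y a * ?V z y a) = pdist rho0 rho1 \<alpha>0 s \<alpha>2 z) \<longrightarrow>
        (\<Sum>y\<in>UNIV. \<Sum>a\<in>UNIV. t y a * ?W y a) \<le> (\<Sum>y\<in>UNIV. \<Sum>a\<in>UNIV. sx y a * ?W y a)"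
    using exists_max[OF st, of ?V "\<lambda>z. pdist rho0 rho1 \<alpha>0 s \<alpha>2 z" ?W] by (auto simp: pdist_form)
  have sx_p: "pdist rho0 rho1 \<alpha>0 sx \<alpha>2 = pdist rho0 rho1 \<alpha>0 s \<alpha>2"
    using sx(2) by (intro ext) (simp add: pdist_form)
  have opt: "ui_ext rho0 u1 \<alpha>0 t \<alpha>2 \<le> ui_ext rho0 u1 \<alpha>0 sx \<alpha>2"
    if "is_strat t" "\<forall>z. pdist rho0 rho1 \<alpha>0 t \<alpha>2 z = pdist rho0 rho1 \<alpha>0 s \<alpha>2 z" for t
    using sx(3) that unfolding ui_form by (simp add: pdist_form)
  have "ui_ext rho0 u1 \<alpha>0 st' \<alpha>2 \<le> ui_ext rho0 u1 \<alpha>0 sx \<alpha>2" using opt[OF st'_strat] pst' by simp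
  then have gt: "ui_ext rho0 u1 \<alpha>0 sx \<alpha>2 > ui_ext rho0 u1 \<alpha>0 s \<alpha>2" using ust' by simp
  have "sx \<noteq> s" using gt by auto
  then obtain yy aa where ne: "sx yy aa \<noteq> s yy aa" by (meson ext)
  define \<delta> where "\<delta> = strat_dist sx s"
  have "\<bar>(\<lambda>(y0, a1). sx y0 a1 - s y0 a1) (yy, aa)\<bar> \<le> \<delta>"
    unfolding \<delta>_def strat_dist_def by (rule supn_ge)
  then have dpos: "\<delta> > 0" using ne by simp
  have nCD1: "\<not> CD1 rho0 rho1 u0 u1 u2 s"
  proof
    assume cd1: "CD1 rho0 rho1 u0 u1 u2 s"
    have h2: "\<delta>/2 > 0" using dpos by simp
    obtain \<eta> where eta: "\<eta> > 0" and H: "\<forall>\<alpha>0 \<alpha>2. (\<alpha>0, \<alpha>2) \<in> B_eta rho0 rho1 u0 u2 \<eta> s \<longrightarrow>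
       (\<forall>s1'. is_strat s1' \<and> strat_dist s1' s > \<delta>/2 \<and>
          supn (\<lambda>y1. pdist rho0 rho1 \<alpha>0 s1' \<alpha>2 y1 - pdist rho0 rho1 \<alpha>0 s \<alpha>2 y1) < \<eta> \<longrightarrow>
          (\<exists>st. is_strat st \<and> pdist rho0 rho1 \<alpha>0 st \<alpha>2 = pdist rho0 rho1 \<alpha>0 s1' \<alpha>2 \<and>
                ui_ext rho0 u1 \<alpha>0 st \<alpha>2 > ui_ext rho0 u1 \<alpha>0 s1' \<alpha>2))"
      using cd1[unfolded CD1_def, rule_format, OF h2] by blast
    have sup0: "supn (\<lambda>y1. pdist rho0 rho1 \<alpha>0 sx \<alpha>2 y1 - pdist rho0 rho1 \<alpha>0 s \<alpha>2 y1) = 0"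
      using sx_p by (simp add: supn_zero)
    have sd: "strat_dist sx s > \<delta>/2" using dpos \<delta>_def by simp
    have Bm: "(\<alpha>0, \<alpha>2) \<in> B_eta rho0 rho1 u0 u2 \<eta> s" using Beta eta by simp
    have "\<exists>st. is_strat st \<and> pdist rho0 rho1 \<alpha>0 st \<alpha>2 = pdist rho0 rho1 \<alpha>0 sx \<alpha>2 \<and>
                ui_ext rho0 u1 \<alpha>0 st \<alpha>2 > ui_ext rho0 u1 \<alpha>0 sx \<alpha>2"
      using H[rule_format, OF Bm, of sx] sx(1) sd sup0 eta by simp
    then obtain t where t: "is_strat t" "pdist rho0 rho1 \<alpha>0 t \<alpha>2 = pdist rho0 rho1 \<alpha>0 sx \<alpha>2"
       "ui_ext rho0 u1 \<alpha>0 t \<alpha>2 > ui_ext rho0 u1 \<alpha>0 sx \<alpha>2" by blast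
    have "ui_ext rho0 u1 \<alpha>0 t \<alpha>2 \<le> ui_ext rho0 u1 \<alpha>0 sx \<alpha>2" using opt[OF t(1)] t(2) sx_p by simp
    then show False using t(3) by simp
  qed
  show ?thesis using nCD1 nCD2 by simp
qed


theorem proposition6:
  fixes rho0 :: "'a0::finite \<Rightarrow> 'y0::finite \<Rightarrow> real"
    and rho1 :: "'a1::finite \<Rightarrow> 'a2::finite \<Rightarrow> 'y1::finite \<Rightarrow> real"
    and u0 :: "'a0 \<Rightarrow> 'a1 \<Rightarrow> real"
    and u1 u2 :: "'y0 \<Rightarrow> 'a1 \<Rightarrow> 'a2 \<Rightarrow> real"
    and rY :: "'y0 rel" and rA :: "'a1 rel"
    and s1 :: "'y0 \<Rightarrow> 'a1 \<Rightarrow> real"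
  assumes rho0_dist: "\<And>a0. is_dist (rho0 a0)"
    and rho1_dist: "\<And>a1 a2. is_dist (rho1 a1 a2)"
    and full_support: "\<And>a0 y0. rho0 a0 y0 > 0"
    and supp_indep: "\<And>y1 a1 a2 a2'. rho1 a1 a2 y1 > 0 \<Longrightarrow> rho1 a1 a2' y1 > 0"
    and lin_indep: "\<And>a2 c. (\<forall>y1. (\<Sum>a1\<in>UNIV. c a1 * rho1 a1 a2 y1) = 0) \<Longrightarrow> (\<forall>a1. c a1 = 0)"
    and rY_total: "linear_order rY"
    and rA_total: "linear_order rA"
    and supermod: "strictly_supermodular rY rA u1"
    and s1_strat: "is_strat s1"
  shows "(confound_defeating rho0 rho1 u0 u1 u2 s1 \<longleftrightarrow> monotone_strat rY rA s1)
       \<and> (monotone_strat rY rA s1 \<longleftrightarrow> u_cyc_monotone_strat u1 s1)"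
  proof -
  have mc: "monotone_strat rY rA s1 \<longleftrightarrow> u_cyc_monotone_strat u1 s1"
    by (rule mono_cyc[OF rY_total rA_total supermod])
  have "confound_defeating rho0 rho1 u0 u1 u2 s1 \<longleftrightarrow> monotone_strat rY rA s1"
  proof
    assume cd: "confound_defeating rho0 rho1 u0 u1 u2 s1"
    show "monotone_strat rY rA s1"
    proof (rule ccontr)
      assume "\<not> monotone_strat rY rA s1"
      from not_mono[where ?rho0.0=rho0 and ?rho1.0=rho1 and ?u0.0=u0 and ?u2.0=u2, OF rY_total rA_total supermod rho0_dist full_support s1_strat this]
      show False using cd unfolding confound_defeating_def by blast
    qed
  next
    assume "monotone_strat rY rA s1"
    from mono_CD2[where ?rho0.0=rho0 and ?rho1.0=rho1 and ?u0.0=u0 and ?u2.0=u2, OF rY_total rA_total supermod rho0_dist full_support s1_strat this]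
    show "confound_defeating rho0 rho1 u0 u1 u2 s1" unfolding confound_defeating_def by blast
  qed
  then show ?thesis using mc by blast
qed

end
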